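(* The maps $m_{\mathcal{A}}((\pi,\mathcal{H},\Omega))$ are well-defined morphisms $\mathbf{GNS}^{\bullet}_{\mathcal{A}}(\mathbf{rest}_{\mathcal{A}}(\pi,\mathcal{H},\Omega))\to(\pi,\mathcal{H},\Omega)$ in $\mathbf{Rep}^{\bullet}(\mathcal{A})$, and the assignment $\mathcal{A}\mapsto m_{\mathcal{A}}$, with $m_{\mathcal{A}}:\mathbf{GNS}^{\bullet}_{\mathcal{A}}\circ\mathbf{rest}_{\mathcal{A}}\Rightarrow\mathrm{id}_{\mathbf{Rep}^{\bullet}(\mathcal{A})}$, defines a modification $m$ from the vertical composite "first $\mathbf{rest}$, then $\mathbf{GNS}^{\bullet}$" to $\mathrm{id}_{\mathbf{Rep}^{\bullet}}$. Furthermore, for each unital $C^*$-algebra $\mathcal{A}$, $m_{\mathcal{A}}$ restricts to a well-defined and vertically invertible natural transformation on the full subcategory $\mathbf{Rep}^{\odot}(\mathcal{A})$ of cyclic representations.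
   Context: All $C^*$-algebras are unital; morphisms $f:\mathcal{A}'\to\mathcal{A}$ are bounded linear maps with $f(a^* )=f(a)^*$, $f(ab)=f(a)f(b)$, $f(1)=1$; $\mathbf{C^*\text{-}Alg}$ is viewed as a 2-category with only identity 2-morphisms and $\mathbf{Cat}$ as the strict 2-category of categories, functors, natural transformations. A state on $\mathcal{A}$ is a bounded linear $\omega:\mathcal{A}\to\mathbb{C}$ with $\omega(1)=1$, $\omega(a^*a)\ge0$. $\mathbf{States}(\mathcal{A})$ is the discrete category of states, $\mathbf{States}(f)(\omega)=\omega\circ f$. $\mathbf{Rep}^{\bullet}(\mathcal{A})$ has objects $(\pi,\mathcal{H},\Omega)$ ($\mathcal{H}$ Hilbert space, $\pi:\mathcal{A}\to\mathcal{B}(\mathcal{H})$ unital $*$-homomorphism, $\Omega\in\mathcal{H}$ unit vector) and morphisms $(\pi,\mathcal{H},\Omega)\to(\pi',\mathcal{H}',\Omega')$ the bounded linear $L$ with $L\pi(a)=\pi'(a)L$ for all $a$, $L\Omega=\Omega'$, $L^*L=\mathrm{id}_{\mathcal{H}}$; $\mathbf{Rep}^{\bullet}(f)$ sends $(\pi,\mathcal{H},\Omega)\mapsto(\pi\circ f,\mathcal{H},\Omega)$, $L\mapsto L$. $\Omega$ is cyclic if $\{\pi(a)\Omega:a\in\mathcal{A}\}$ is dense in $\mathcal{H}$; $\mathbf{Rep}^{\odot}(\mathcal{A})$ is the full subcategory of $\mathbf{Rep}^{\bullet}(\mathcal{A})$ on triples with $\Omega$ cyclic. $\mathbf{rest}_{\mathcal{A}}$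 sends $(\pi,\mathcal{H},\Omega)$ to the state $a\mapsto\langle\Omega,\pi(a)\Omega\rangle$ and morphisms to identities; $\mathbf{rest}_f$ is the identity. GNS: for a state $\omega$ on $\mathcal{A}$, $\mathcal{N}_\omega=\{x:\omega(x^*x)=0\}$, $\mathcal{H}_\omega$ is the completion of $\mathcal{A}/\mathcal{N}_\omega$ under $\langle[b],[a]\rangle_\omega=\omega(b^*a)$, $\pi_\omega(a)$ extends $[b]\mapsto[ab]$, $\mathbf{GNS}^{\bullet}_{\mathcal{A}}(\omega)=(\pi_\omega,\mathcal{H}_\omega,[1_{\mathcal{A}}])$, and $\mathbf{GNS}^{\bullet}_f(\omega)$ is the extension of $[a']\mapsto[f(a')]$, a morphism $(\pi_{\omega\circ f},\mathcal{H}_{\omega\circ f},[1_{\mathcal{A}'}])\to(\pi_\omega\circ f,\mathcal{H}_\omega,[1_{\mathcal{A}}])$. For a pointed representation $(\pi,\mathcal{H},\Omega)$ of $\mathcal{A}$ with $\omega=\mathbf{rest}_{\mathcal{A}}(\pi,\mathcal{H},\Omega)$, $m_{\mathcal{A}}((\pi,\mathcal{H},\Omega)):\mathcal{H}_\omega\to\mathcal{H}$ is the bounded extension of $[a]\mapsto\pi(a)\Omega$. A modification $m:\sigma\Rrightarrow\rho$ between oplax-natural transformations $\sigma,\rho:F\Rightarrow G$ (components $\sigma(x):F(x)\to G(x)$, 2-cells $\sigma(\alpha):\sigma(y)\circ F(\alpha)\Rightarrow G(\alpha)\circ\sigma(x)$ for $\alpha:x\to y$) assigns to each object $x$ a 2-morphism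 $m(x):\sigma(x)\Rightarrow\rho(x)$ such that $\rho(\alpha)\cdot(m(y)\circ\mathrm{id}_{F(\alpha)})=(\mathrm{id}_{G(\alpha)}\circ m(x))\cdot\sigma(\alpha)$ for every 1-morphism $\alpha:x\to y$. Here the vertical composite "first $\mathbf{rest}$, then $\mathbf{GNS}^{\bullet}$" has components $\mathbf{GNS}^{\bullet}_{\mathcal{A}}\circ\mathbf{rest}_{\mathcal{A}}$ and 2-cells $\mathbf{GNS}^{\bullet}_f\circ\mathrm{id}_{\mathbf{rest}_{\mathcal{A}}}$ (for $f:\mathcal{A}'\to\mathcal{A}$), and $\mathrm{id}_{\mathbf{Rep}^{\bullet}}$ has identity components and 2-cells. *)

theory Defs
  imports Complex_Main
begin

record 'a cstar_alg =
  ca_add   :: "'a \<Rightarrow> 'a \<Rightarrow> 'a"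
  ca_zero  :: 'a
  ca_scale :: "complex \<Rightarrow> 'a \<Rightarrow> 'a"
  ca_mul   :: "'a \<Rightarrow> 'a \<Rightarrow> 'a"
  ca_one   :: 'a
  ca_star  :: "'a \<Rightarrow> 'a"
  ca_norm  :: "'a \<Rightarrow> real"

definition ca_sub :: "'a cstar_alg \<Rightarrow> 'a \<Rightarrow> 'a \<Rightarrow> 'a" where
  "ca_sub A a b = ca_add A a (ca_scale A (-1) b)"

definition cstar_algebra :: "'a cstar_alg \<Rightarrow> bool" where
  "cstar_algebra A \<longleftrightarrow>
     \<comment> \<open>complex vector space\<close>
     (\<forall>a b c. ca_add A (ca_add A a b) c = ca_add A a (ca_add A b c)) \<and>
     (\<forall>a b. ca_add A a b = ca_add A b a) \<and>
     (\<forall>a. ca_add A (ca_zero A) a = a) \<and>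
     (\<forall>a. \<exists>b. ca_add A a b = ca_zero A) \<and>
     (\<forall>a. ca_scale A 1 a = a) \<and>
     (\<forall>c d a. ca_scale A c (ca_scale A d a) = ca_scale A (c * d) a) \<and>
     (\<forall>c d a. ca_scale A (c + d) a = ca_add A (ca_scale A c a) (ca_scale A d a)) \<and>
     (\<forall>c a b. ca_scale A c (ca_add A a b) = ca_add A (ca_scale A c a) (ca_scale A c b)) \<and>
     \<comment> \<open>unital associative algebra\<close>
     (\<forall>a b c. ca_mul A (ca_mul A a b) c = ca_mul A a (ca_mul A b c)) \<and>
     (\<forall>a. ca_mul A (ca_one A) a = a \<and> ca_mul A a (ca_one A) = a) \<and>
     (\<forall>a b c. ca_mul A a (ca_add A b c) = ca_add A (ca_mul A a b) (ca_mul A a c)) \<and>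
     (\<forall>a b c. ca_mul A (ca_add A a b) c = ca_add A (ca_mul A a c) (ca_mul A b c)) \<and>
     (\<forall>z a b. ca_mul A (ca_scale A z a) b = ca_scale A z (ca_mul A a b) \<and>
              ca_mul A a (ca_scale A z b) = ca_scale A z (ca_mul A a b)) \<and>
     \<comment> \<open>involution\<close>
     (\<forall>a. ca_star A (ca_star A a) = a) \<and>
     (\<forall>a b. ca_star A (ca_add A a b) = ca_add A (ca_star A a) (ca_star A b)) \<and>
     (\<forall>z a. ca_star A (ca_scale A z a) = ca_scale A (cnj z) (ca_star A a)) \<and>
     (\<forall>a b. ca_star A (ca_mul A a b) = ca_mul A (ca_star A b) (ca_star A a)) \<and>
     \<comment> \<open>submultiplicative norm\<close>
     (\<forall>a. ca_norm A a = 0 \<longleftrightarrow> a = ca_zero A) \<and>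
     (\<forall>z a. ca_norm A (ca_scale A z a) = cmod z * ca_norm A a) \<and>
     (\<forall>a b. ca_norm A (ca_add A a b) \<le> ca_norm A a + ca_norm A b) \<and>
     (\<forall>a b. ca_norm A (ca_mul A a b) \<le> ca_norm A a * ca_norm A b) \<and>
     \<comment> \<open>completeness\<close>
     (\<forall>s. (\<forall>e>0. \<exists>N. \<forall>m\<ge>N. \<forall>n\<ge>N. ca_norm A (ca_sub A (s m) (s n)) < e) \<longrightarrow>
          (\<exists>l. (\<lambda>n. ca_norm A (ca_sub A (s n) l)) \<longlonglongrightarrow> 0)) \<and>
     \<comment> \<open>C*-identity\<close>
     (\<forall>a. ca_norm A (ca_mul A (ca_star A a) a) = (ca_norm A a)\<^sup>2)"

definition cstar_hom :: "'b cstar_alg \<Rightarrow> 'a cstar_alg \<Rightarrow> ('b \<Rightarrow> 'a) \<Rightarrow> bool" where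
  "cstar_hom A' A f \<longleftrightarrow>
     (\<forall>a b. f (ca_add A' a b) = ca_add A (f a) (f b)) \<and>
     (\<forall>z a. f (ca_scale A' z a) = ca_scale A z (f a)) \<and>
     (\<exists>C. \<forall>a. ca_norm A (f a) \<le> C * ca_norm A' a) \<and>
     (\<forall>a. f (ca_star A' a) = ca_star A (f a)) \<and>
     (\<forall>a b. f (ca_mul A' a b) = ca_mul A (f a) (f b)) \<and>
     f (ca_one A') = ca_one A"

definition is_state :: "'a cstar_alg \<Rightarrow> ('a \<Rightarrow> complex) \<Rightarrow> bool" where
  "is_state A \<omega> \<longleftrightarrow>
     (\<forall>a b. \<omega> (ca_add A a b) = \<omega> a + \<omega> b) \<and>
     (\<forall>z a. \<omega> (ca_scale A z a) = z * \<omega> a) \<and>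
     (\<exists>C. \<forall>a. cmod (\<omega> a) \<le> C * ca_norm A a) \<and>
     \<omega> (ca_one A) = 1 \<and>
     (\<forall>a. Im (\<omega> (ca_mul A (ca_star A a) a)) = 0 \<and> Re (\<omega> (ca_mul A (ca_star A a) a)) \<ge> 0)"

record 'h hilb =
  hs_carrier :: "'h set"
  hs_add     :: "'h \<Rightarrow> 'h \<Rightarrow> 'h"
  hs_zero    :: 'h
  hs_scale   :: "complex \<Rightarrow> 'h \<Rightarrow> 'h"
  hs_inner   :: "'h \<Rightarrow> 'h \<Rightarrow> complex"  \<comment> \<open>antilinear in the first, linear in the second argument\<close>

definition hs_sub :: "'h hilb \<Rightarrow> 'h \<Rightarrow> 'h \<Rightarrow> 'h" where
  "hs_sub H x y = hs_add H x (hs_scale H (-1) y)"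

definition hs_norm :: "'h hilb \<Rightarrow> 'h \<Rightarrow> real" where
  "hs_norm H x = sqrt (Re (hs_inner H x x))"

definition hs_cauchy :: "'h hilb \<Rightarrow> (nat \<Rightarrow> 'h) \<Rightarrow> bool" where
  "hs_cauchy H s \<longleftrightarrow> (\<forall>e>0. \<exists>N. \<forall>m\<ge>N. \<forall>n\<ge>N. hs_norm H (hs_sub H (s m) (s n)) < e)"

definition hs_tendsto :: "'h hilb \<Rightarrow> (nat \<Rightarrow> 'h) \<Rightarrow> 'h \<Rightarrow> bool" where
  "hs_tendsto H s l \<longleftrightarrow> l \<in> hs_carrier H \<and> (\<lambda>n. hs_norm H (hs_sub H (s n) l)) \<longlonglongrightarrow> 0"

definition hs_lim :: "'h hilb \<Rightarrow> (nat \<Rightarrow> 'h) \<Rightarrow> 'h" where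
  "hs_lim H s = (THE l. hs_tendsto H s l)"

definition hilbert_space :: "'h hilb \<Rightarrow> bool" where
  "hilbert_space H \<longleftrightarrow>
     hs_zero H \<in> hs_carrier H \<and>
     (\<forall>x\<in>hs_carrier H. \<forall>y\<in>hs_carrier H. hs_add H x y \<in> hs_carrier H) \<and>
     (\<forall>c. \<forall>x\<in>hs_carrier H. hs_scale H c x \<in> hs_carrier H) \<and>
     (\<forall>x\<in>hs_carrier H. \<forall>y\<in>hs_carrier H. \<forall>z\<in>hs_carrier H.
         hs_add H (hs_add H x y) z = hs_add H x (hs_add H y z)) \<and>
     (\<forall>x\<in>hs_carrier H. \<forall>y\<in>hs_carrier H. hs_add H x y = hs_add H y x) \<and>
     (\<forall>x\<in>hs_carrier H. hs_add H (hs_zero H) x = x) \<and>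
     (\<forall>x\<in>hs_carrier H. \<exists>y\<in>hs_carrier H. hs_add H x y = hs_zero H) \<and>
     (\<forall>x\<in>hs_carrier H. hs_scale H 1 x = x) \<and>
     (\<forall>c d. \<forall>x\<in>hs_carrier H. hs_scale H c (hs_scale H d x) = hs_scale H (c * d) x) \<and>
     (\<forall>c d. \<forall>x\<in>hs_carrier H. hs_scale H (c + d) x = hs_add H (hs_scale H c x) (hs_scale H d x)) \<and>
     (\<forall>c. \<forall>x\<in>hs_carrier H. \<forall>y\<in>hs_carrier H.
         hs_scale H c (hs_add H x y) = hs_add H (hs_scale H c x) (hs_scale H c y)) \<and>
     (\<forall>x\<in>hs_carrier H. \<forall>y\<in>hs_carrier H. \<forall>z\<in>hs_carrier H.
         hs_inner H x (hs_add H y z) = hs_inner H x y + hs_inner H x z) \<and>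
     (\<forall>c. \<forall>x\<in>hs_carrier H. \<forall>y\<in>hs_carrier H. hs_inner H x (hs_scale H c y) = c * hs_inner H x y) \<and>
     (\<forall>x\<in>hs_carrier H. \<forall>y\<in>hs_carrier H. hs_inner H y x = cnj (hs_inner H x y)) \<and>
     (\<forall>x\<in>hs_carrier H. Re (hs_inner H x x) \<ge> 0) \<and>
     (\<forall>x\<in>hs_carrier H. hs_inner H x x = 0 \<longrightarrow> x = hs_zero H) \<and>
     (\<forall>s. (\<forall>n. s n \<in> hs_carrier H) \<and> hs_cauchy H s \<longrightarrow> (\<exists>l. hs_tendsto H s l))"

definition hs_bounded_linear :: "'h hilb \<Rightarrow> 'k hilb \<Rightarrow> ('h \<Rightarrow> 'k) \<Rightarrow> bool" where
  "hs_bounded_linear H K T \<longleftrightarrow>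
     (\<forall>x\<in>hs_carrier H. T x \<in> hs_carrier K) \<and>
     (\<forall>x\<in>hs_carrier H. \<forall>y\<in>hs_carrier H. T (hs_add H x y) = hs_add K (T x) (T y)) \<and>
     (\<forall>c. \<forall>x\<in>hs_carrier H. T (hs_scale H c x) = hs_scale K c (T x)) \<and>
     (\<exists>C. \<forall>x\<in>hs_carrier H. hs_norm K (T x) \<le> C * hs_norm H x)"

definition hs_adjoint :: "'h hilb \<Rightarrow> 'k hilb \<Rightarrow> ('h \<Rightarrow> 'k) \<Rightarrow> ('k \<Rightarrow> 'h) \<Rightarrow> bool" where
  "hs_adjoint H K T T' \<longleftrightarrow>
     (\<forall>y\<in>hs_carrier K. T' y \<in> hs_carrier H) \<and>
     (\<forall>x\<in>hs_carrier H. \<forall>y\<in>hs_carrier K. hs_inner K (T x) y = hs_inner H x (T' y))"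

definition is_rep :: "'a cstar_alg \<Rightarrow> ('a \<Rightarrow> 'h \<Rightarrow> 'h) \<Rightarrow> 'h hilb \<Rightarrow> bool" where
  "is_rep A \<pi> H \<longleftrightarrow>
     hilbert_space H \<and>
     (\<forall>a. hs_bounded_linear H H (\<pi> a)) \<and>
     (\<forall>a b. \<forall>x\<in>hs_carrier H. \<pi> (ca_add A a b) x = hs_add H (\<pi> a x) (\<pi> b x)) \<and>
     (\<forall>z a. \<forall>x\<in>hs_carrier H. \<pi> (ca_scale A z a) x = hs_scale H z (\<pi> a x)) \<and>
     (\<forall>a b. \<forall>x\<in>hs_carrier H. \<pi> (ca_mul A a b) x = \<pi> a (\<pi> b x)) \<and>
     (\<forall>x\<in>hs_carrier H. \<pi> (ca_one A) x = x) \<and>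
     (\<forall>a. hs_adjoint H H (\<pi> a) (\<pi> (ca_star A a)))"

definition is_prep :: "'a cstar_alg \<Rightarrow> ('a \<Rightarrow> 'h \<Rightarrow> 'h) \<Rightarrow> 'h hilb \<Rightarrow> 'h \<Rightarrow> bool" where
  "is_prep A \<pi> H \<Omega> \<longleftrightarrow> is_rep A \<pi> H \<and> \<Omega> \<in> hs_carrier H \<and> hs_norm H \<Omega> = 1"

definition is_cyclic :: "('a \<Rightarrow> 'h \<Rightarrow> 'h) \<Rightarrow> 'h hilb \<Rightarrow> 'h \<Rightarrow> bool" where
  "is_cyclic \<pi> H \<Omega> \<longleftrightarrow>
     (\<forall>x\<in>hs_carrier H. \<forall>e>0. \<exists>a. hs_norm H (hs_sub H x (\<pi> a \<Omega>)) < e)"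

definition is_rep_mor ::
  "'a cstar_alg \<Rightarrow> ('a \<Rightarrow> 'h \<Rightarrow> 'h) \<Rightarrow> 'h hilb \<Rightarrow> 'h \<Rightarrow>
   ('a \<Rightarrow> 'k \<Rightarrow> 'k) \<Rightarrow> 'k hilb \<Rightarrow> 'k \<Rightarrow> ('h \<Rightarrow> 'k) \<Rightarrow> bool" where
  "is_rep_mor A \<pi> H \<Omega> \<pi>' H' \<Omega>' L \<longleftrightarrow>
     hs_bounded_linear H H' L \<and>
     (\<forall>a. \<forall>x\<in>hs_carrier H. L (\<pi> a x) = \<pi>' a (L x)) \<and>
     L \<Omega> = \<Omega>' \<and>
     (\<exists>L'. hs_adjoint H H' L L' \<and> (\<forall>x\<in>hs_carrier H. L' (L x) = x))"

definition rest :: "('a \<Rightarrow> 'h \<Rightarrow> 'h) \<Rightarrow> 'h hilb \<Rightarrow> 'h \<Rightarrow> 'a \<Rightarrow> complex" where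
  "rest \<pi> H \<Omega> = (\<lambda>a. hs_inner H \<Omega> (\<pi> a \<Omega>))"

text \<open>The completion of \<open>\<A>/\<N>\<^sub>\<omega>\<close> is realised as classes of sequences in \<open>\<A>\<close> that are Cauchy for
  the seminorm a |-> sqrt(omega(a* a)), modulo sequences tending to \<open>0\<close> in that seminorm.
  The class \<open>[a]\<close> of \<open>a \<in> \<A>\<close> is the class of the constant sequence.\<close>

definition gns_p :: "'a cstar_alg \<Rightarrow> ('a \<Rightarrow> complex) \<Rightarrow> 'a \<Rightarrow> real" where
  "gns_p A \<omega> a = sqrt (Re (\<omega> (ca_mul A (ca_star A a) a)))"

definition gns_cauchy :: "'a cstar_alg \<Rightarrow> ('a \<Rightarrow> complex) \<Rightarrow> (nat \<Rightarrow> 'a) \<Rightarrow> bool" where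
  "gns_cauchy A \<omega> x \<longleftrightarrow> (\<forall>e>0. \<exists>N. \<forall>m\<ge>N. \<forall>n\<ge>N. gns_p A \<omega> (ca_sub A (x m) (x n)) < e)"

definition gns_class :: "'a cstar_alg \<Rightarrow> ('a \<Rightarrow> complex) \<Rightarrow> (nat \<Rightarrow> 'a) \<Rightarrow> (nat \<Rightarrow> 'a) set" where
  "gns_class A \<omega> x =
     {y. gns_cauchy A \<omega> y \<and> (\<lambda>n. gns_p A \<omega> (ca_sub A (x n) (y n))) \<longlonglongrightarrow> 0}"

definition gns_rep :: "(nat \<Rightarrow> 'a) set \<Rightarrow> nat \<Rightarrow> 'a" where
  "gns_rep X = (SOME x. x \<in> X)"

definition gns_space :: "'a cstar_alg \<Rightarrow> ('a \<Rightarrow> complex) \<Rightarrow> (nat \<Rightarrow> 'a) set hilb" where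
  "gns_space A \<omega> =
     \<lparr> hs_carrier = {gns_class A \<omega> x | x. gns_cauchy A \<omega> x},
       hs_add = (\<lambda>X Y. gns_class A \<omega> (\<lambda>n. ca_add A (gns_rep X n) (gns_rep Y n))),
       hs_zero = gns_class A \<omega> (\<lambda>n. ca_zero A),
       hs_scale = (\<lambda>c X. gns_class A \<omega> (\<lambda>n. ca_scale A c (gns_rep X n))),
       hs_inner = (\<lambda>X Y. lim (\<lambda>n. \<omega> (ca_mul A (ca_star A (gns_rep X n)) (gns_rep Y n)))) \<rparr>"

definition gns_vec :: "'a cstar_alg \<Rightarrow> ('a \<Rightarrow> complex) \<Rightarrow> 'a \<Rightarrow> (nat \<Rightarrow> 'a) set" where
  "gns_vec A \<omega> a = gns_class A \<omega> (\<lambda>n. a)"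

definition gns_pi :: "'a cstar_alg \<Rightarrow> ('a \<Rightarrow> complex) \<Rightarrow> 'a \<Rightarrow> (nat \<Rightarrow> 'a) set \<Rightarrow> (nat \<Rightarrow> 'a) set" where
  "gns_pi A \<omega> a X = gns_class A \<omega> (\<lambda>n. ca_mul A a (gns_rep X n))"

text \<open>GNS_f(omega) for \<open>f : \<A>' \<rightarrow> \<A>\<close> and a state \<open>\<omega>\<close> on \<open>\<A>\<close>: the extension of \<open>[a'] \<mapsto> [f a']\<close>,
  a map \<open>\<H>\<^sub>\<omega>\<^sub>\<circ>\<^sub>f \<rightarrow> \<H>\<^sub>\<omega>\<close>.\<close>
definition gns_mor :: "'a cstar_alg \<Rightarrow> ('b \<Rightarrow> 'a) \<Rightarrow> ('a \<Rightarrow> complex) \<Rightarrow> (nat \<Rightarrow> 'b) set \<Rightarrow> (nat \<Rightarrow> 'a) set" where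
  "gns_mor A f \<omega> X' = gns_class A \<omega> (\<lambda>n. f (gns_rep X' n))"

text \<open>\<open>m\<^sub>\<A>((\<pi>,\<H>,\<Omega>))\<close>: the bounded extension of \<open>[a] \<mapsto> \<pi>(a)\<Omega>\<close> to \<open>\<H>\<^sub>\<omega>\<close>, \<open>\<omega> = rest(\<pi>,\<H>,\<Omega>)\<close>.\<close>
definition m_map :: "('a \<Rightarrow> 'h \<Rightarrow> 'h) \<Rightarrow> 'h hilb \<Rightarrow> 'h \<Rightarrow> (nat \<Rightarrow> 'a) set \<Rightarrow> 'h" where
  "m_map \<pi> H \<Omega> X = hs_lim H (\<lambda>n. \<pi> (gns_rep X n) \<Omega>)"

end

theory Submission
  imports Defs
begin

lemma squeeze0: "(\<And>n. 0 \<le> a n) \<Longrightarrow> (\<And>n. a n \<le> b n) \<Longrightarrow> b \<longlonglongrightarrow> 0 \<Longrightarrow> a \<longlonglongrightarrow> (0::real)"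
  by (rule real_tendsto_sandwich[of "\<lambda>n. 0" a sequentially b]) auto

lemma inv_lim: "(\<lambda>n. 1 / (real n + 1)) \<longlonglongrightarrow> 0"
  using LIMSEQ_inverse_real_of_nat by (simp add: inverse_eq_divide add.commute)

locale hs =
  fixes H :: "'h hilb"
  assumes hil: "hilbert_space H"
begin

abbreviation "C \<equiv> hs_carrier H"
lemmas hax = hil[unfolded hilbert_space_def]
lemmas ax1 = hax[THEN conjunct1]
lemmas ax2 = hax[THEN conjunct2, THEN conjunct1]
lemmas ax3 = hax[THEN conjunct2, THEN conjunct2, THEN conjunct1]
lemmas ax4 = hax[THEN conjunct2, THEN conjunct2, THEN conjunct2, THEN conjunct1]
lemmas ax5 = hax[THEN conjunct2, THEN conjunct2, THEN conjunct2, THEN conjunct2, THEN conjunct1]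
lemmas ax6 = hax[THEN conjunct2, THEN conjunct2, THEN conjunct2, THEN conjunct2, THEN conjunct2, THEN conjunct1]
lemmas ax7 = hax[THEN conjunct2, THEN conjunct2, THEN conjunct2, THEN conjunct2, THEN conjunct2, THEN conjunct2, THEN conjunct1]
lemmas ax8 = hax[THEN conjunct2, THEN conjunct2, THEN conjunct2, THEN conjunct2, THEN conjunct2, THEN conjunct2, THEN conjunct2, THEN conjunct1]
lemmas ax9 = hax[THEN conjunct2, THEN conjunct2, THEN conjunct2, THEN conjunct2, THEN conjunct2, THEN conjunct2, THEN conjunct2, THEN conjunct2, THEN conjunct1]
lemmas ax10 = hax[THEN conjunct2, THEN conjunct2, THEN conjunct2, THEN conjunct2, THEN conjunct2, THEN conjunct2, THEN conjunct2, THEN conjunct2, THEN conjunct2, THEN conjunct1]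
lemmas ax11 = hax[THEN conjunct2, THEN conjunct2, THEN conjunct2, THEN conjunct2, THEN conjunct2, THEN conjunct2, THEN conjunct2, THEN conjunct2, THEN conjunct2, THEN conjunct2, THEN conjunct1]
lemmas ax12 = hax[THEN conjunct2, THEN conjunct2, THEN conjunct2, THEN conjunct2, THEN conjunct2, THEN conjunct2, THEN conjunct2, THEN conjunct2, THEN conjunct2, THEN conjunct2, THEN conjunct2, THEN conjunct1]
lemmas ax13 = hax[THEN conjunct2, THEN conjunct2, THEN conjunct2, THEN conjunct2, THEN conjunct2, THEN conjunct2, THEN conjunct2, THEN conjunct2, THEN conjunct2, THEN conjunct2, THEN conjunct2, THEN conjunct2, THEN conjunct1]
lemmas ax14 = hax[THEN conjunct2, THEN conjunct2, THEN conjunct2, THEN conjunct2, THEN conjunct2, THEN conjunct2, THEN conjunct2, THEN conjunct2, THEN conjunct2, THEN conjunct2, THEN conjunct2, THEN conjunct2, THEN conjunct2, THEN conjunct1]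
lemmas ax15 = hax[THEN conjunct2, THEN conjunct2, THEN conjunct2, THEN conjunct2, THEN conjunct2, THEN conjunct2, THEN conjunct2, THEN conjunct2, THEN conjunct2, THEN conjunct2, THEN conjunct2, THEN conjunct2, THEN conjunct2, THEN conjunct2, THEN conjunct1]
lemmas ax16 = hax[THEN conjunct2, THEN conjunct2, THEN conjunct2, THEN conjunct2, THEN conjunct2, THEN conjunct2, THEN conjunct2, THEN conjunct2, THEN conjunct2, THEN conjunct2, THEN conjunct2, THEN conjunct2, THEN conjunct2, THEN conjunct2, THEN conjunct2, THEN conjunct1]
lemmas ax17 = hax[THEN conjunct2, THEN conjunct2, THEN conjunct2, THEN conjunct2, THEN conjunct2, THEN conjunct2, THEN conjunct2, THEN conjunct2, THEN conjunct2, THEN conjunct2, THEN conjunct2, THEN conjunct2, THEN conjunct2, THEN conjunct2, THEN conjunct2, THEN conjunct2]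
abbreviation add (infixl "\<oplus>" 65) where "x \<oplus> y \<equiv> hs_add H x y"
abbreviation scl (infixr "\<cdot>" 75) where "c \<cdot> x \<equiv> hs_scale H c x"
abbreviation "z \<equiv> hs_zero H"
abbreviation inn ("\<langle>_,_\<rangle>") where "\<langle>x,y\<rangle> \<equiv> hs_inner H x y"
abbreviation sub (infixl "\<ominus>" 65) where "x \<ominus> y \<equiv> hs_sub H x y"
abbreviation nrm ("\<parallel>_\<parallel>") where "\<parallel>x\<parallel> \<equiv> hs_norm H x"

lemma zero_in[simp]: "z \<in> C" using ax1 by blast
lemma add_in[simp]: "x \<in> C \<Longrightarrow> y \<in> C \<Longrightarrow> x \<oplus> y \<in> C" using ax2 by blast
lemma scl_in[simp]: "x \<in> C \<Longrightarrow> c \<cdot> x \<in> C" using ax3 by blast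
lemma sub_in[simp]: "x \<in> C \<Longrightarrow> y \<in> C \<Longrightarrow> x \<ominus> y \<in> C" unfolding hs_sub_def by simp

lemma inner_add_right[simp]: "x \<in> C \<Longrightarrow> y \<in> C \<Longrightarrow> w \<in> C \<Longrightarrow> \<langle>x, y \<oplus> w\<rangle> = \<langle>x,y\<rangle> + \<langle>x,w\<rangle>"
  using ax12 by blast
lemma inner_scl_right[simp]: "x \<in> C \<Longrightarrow> y \<in> C \<Longrightarrow> \<langle>x, c \<cdot> y\<rangle> = c * \<langle>x,y\<rangle>"
  using ax13 by blast
lemma inner_sym: "x \<in> C \<Longrightarrow> y \<in> C \<Longrightarrow> \<langle>y, x\<rangle> = cnj \<langle>x,y\<rangle>"
  using ax14 by blast
lemma inner_pos: "x \<in> C \<Longrightarrow> Re \<langle>x,x\<rangle> \<ge> 0"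
  using ax15 by blast
lemma inner_eq0: "x \<in> C \<Longrightarrow> \<langle>x,x\<rangle> = 0 \<Longrightarrow> x = z"
  using ax16 by blast
lemma complete: "(\<forall>n. s n \<in> C) \<Longrightarrow> hs_cauchy H s \<Longrightarrow> \<exists>l. hs_tendsto H s l"
  using ax17 by blast

lemma inner_add_left[simp]: "x \<in> C \<Longrightarrow> y \<in> C \<Longrightarrow> w \<in> C \<Longrightarrow> \<langle>y \<oplus> w, x\<rangle> = \<langle>y,x\<rangle> + \<langle>w,x\<rangle>"
proof -
  assume a: "x \<in> C" "y \<in> C" "w \<in> C"
  have "\<langle>y \<oplus> w, x\<rangle> = cnj \<langle>x, y \<oplus> w\<rangle>" using a inner_sym[of x "y \<oplus> w"] by simp
  also have "\<dots> = cnj \<langle>x,y\<rangle> + cnj \<langle>x,w\<rangle>" using a by simp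
  also have "\<dots> = \<langle>y,x\<rangle> + \<langle>w,x\<rangle>" using a inner_sym[of x y] inner_sym[of x w] by simp
  finally show ?thesis .
qed
lemma inner_scl_left[simp]: "x \<in> C \<Longrightarrow> y \<in> C \<Longrightarrow> \<langle>c \<cdot> y, x\<rangle> = cnj c * \<langle>y,x\<rangle>"
proof -
  assume a: "x \<in> C" "y \<in> C"
  have "\<langle>c \<cdot> y, x\<rangle> = cnj \<langle>x, c \<cdot> y\<rangle>" using a inner_sym[of x "c \<cdot> y"] by simp
  also have "\<dots> = cnj c * cnj \<langle>x,y\<rangle>" using a by simp
  also have "\<dots> = cnj c * \<langle>y,x\<rangle>" using a inner_sym[of x y] by simp
  finally show ?thesis .
qed
lemma inner_sub_right[simp]: "x \<in> C \<Longrightarrow> y \<in> C \<Longrightarrow> w \<in> C \<Longrightarrow> \<langle>x, y \<ominus> w\<rangle> = \<langle>x,y\<rangle> - \<langle>x,w\<rangle>"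
  unfolding hs_sub_def by simp
lemma inner_sub_left[simp]: "x \<in> C \<Longrightarrow> y \<in> C \<Longrightarrow> w \<in> C \<Longrightarrow> \<langle>y \<ominus> w, x\<rangle> = \<langle>y,x\<rangle> - \<langle>w,x\<rangle>"
  unfolding hs_sub_def by simp

lemma add_assoc: "x \<in> C \<Longrightarrow> y \<in> C \<Longrightarrow> w \<in> C \<Longrightarrow> (x \<oplus> y) \<oplus> w = x \<oplus> (y \<oplus> w)"
  using ax4 by blast
lemma add_comm: "x \<in> C \<Longrightarrow> y \<in> C \<Longrightarrow> x \<oplus> y = y \<oplus> x"
  using ax5 by blast
lemma zero_add: "x \<in> C \<Longrightarrow> z \<oplus> x = x"
  using ax6 by blast

lemma inner_zero_left[simp]: "x \<in> C \<Longrightarrow> \<langle>z, x\<rangle> = 0"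
proof -
  assume a: "x \<in> C"
  have "\<langle>z \<oplus> z, x\<rangle> = \<langle>z, x\<rangle>" using zero_add[of z] by simp
  thus ?thesis using a by simp
qed
lemma inner_zero_right[simp]: "x \<in> C \<Longrightarrow> \<langle>x, z\<rangle> = 0"
proof -
  assume a: "x \<in> C"
  have "\<langle>x, z\<rangle> = cnj \<langle>z, x\<rangle>" using a inner_sym[of z x] by simp
  thus ?thesis using a by simp
qed

lemma neg_add: "y \<in> C \<Longrightarrow> ((-1) \<cdot> y) \<oplus> y = z"
  by (rule inner_eq0) simp_all

lemma sub_zero_eq: assumes "x \<in> C" "y \<in> C" "x \<ominus> y = z" shows "x = y"
proof -
  have "y = z \<oplus> y" using assms by (simp add: zero_add)
  also have "\<dots> = (x \<oplus> (-1) \<cdot> y) \<oplus> y" using assms(3) unfolding hs_sub_def by simp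
  also have "\<dots> = x \<oplus> z" using assms by (simp add: add_assoc neg_add)
  also have "\<dots> = x" using assms add_comm[of x z] zero_add[of x] by simp
  finally show ?thesis by simp
qed

lemma hs_eqI: "x \<in> C \<Longrightarrow> y \<in> C \<Longrightarrow> \<langle>x \<ominus> y, x \<ominus> y\<rangle> = 0 \<Longrightarrow> x = y"
  by (rule sub_zero_eq, simp_all, rule inner_eq0, simp_all)


lemma inner_self_real: "x \<in> C \<Longrightarrow> \<langle>x,x\<rangle> = complex_of_real (Re \<langle>x,x\<rangle>)"
proof -
  assume a: "x \<in> C"
  have "\<langle>x,x\<rangle> = cnj \<langle>x,x\<rangle>" using inner_sym[OF a a] .
  hence "Im \<langle>x,x\<rangle> = 0" by (metis cnj.simps(2) neg_equal_zero complex.sel(2))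
  thus ?thesis by (simp add: complex_eq_iff)
qed

lemma norm_nonneg[simp]: "x \<in> C \<Longrightarrow> \<parallel>x\<parallel> \<ge> 0" unfolding hs_norm_def by (simp add: inner_pos)
lemma norm_sq: "x \<in> C \<Longrightarrow> \<parallel>x\<parallel>^2 = Re \<langle>x,x\<rangle>" unfolding hs_norm_def by (simp add: inner_pos)

lemma CS: assumes x: "x \<in> C" and y: "y \<in> C" shows "cmod \<langle>y,x\<rangle> \<le> \<parallel>x\<parallel> * \<parallel>y\<parallel>"
proof -
  define r where "r = Re \<langle>y,y\<rangle>"
  define b where "b = \<langle>y,x\<rangle>"
  have r0: "r \<ge> 0" unfolding r_def using inner_pos[OF y] .
  have xy: "\<langle>x,y\<rangle> = cnj b" unfolding b_def using inner_sym[OF y x] .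
  have yy: "\<langle>y,y\<rangle> = complex_of_real r" unfolding r_def using inner_self_real[OF y] .
  have xx: "\<langle>x,x\<rangle> = complex_of_real (Re \<langle>x,x\<rangle>)" using inner_self_real[OF x] .
  define v where "v = (complex_of_real r) \<cdot> x \<oplus> (-b) \<cdot> y"
  have vC: "v \<in> C" unfolding v_def using x y by simp
  have "\<langle>v,v\<rangle> = complex_of_real r * complex_of_real r * \<langle>x,x\<rangle> + complex_of_real r * (-b) * \<langle>x,y\<rangle>
      + cnj (-b) * complex_of_real r * \<langle>y,x\<rangle> + cnj (-b) * (-b) * \<langle>y,y\<rangle>"
    unfolding v_def using x y by (simp add: algebra_simps)
  also have "\<dots> = complex_of_real (r * r * Re \<langle>x,x\<rangle> - r * (cmod b)^2)"
    using xy yy xx unfolding b_def[symmetric]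
    by (simp add: algebra_simps complex_norm_square[symmetric] mult.commute[of b "cnj b"])
  finally have "Re \<langle>v,v\<rangle> = r * r * Re \<langle>x,x\<rangle> - r * (cmod b)^2" by simp
  hence ineq: "r * (cmod b)^2 \<le> r * (r * Re \<langle>x,x\<rangle>)" using inner_pos[OF vC] by (simp add: algebra_simps)
  show ?thesis
  proof (cases "r = 0")
    case True
    hence "y = z" using inner_eq0[OF y] yy by simp
    thus ?thesis using x unfolding b_def by simp
  next
    case False
    hence "(cmod b)^2 \<le> r * Re \<langle>x,x\<rangle>" using ineq r0 by simp
    also have "\<dots> = (\<parallel>x\<parallel> * \<parallel>y\<parallel>)^2" using norm_sq[OF x] norm_sq[OF y] r_def by (simp add: power_mult_distrib)
    finally show ?thesis unfolding b_def by (rule power2_le_imp_le) (simp add: x y)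
  qed
qed

lemma norm_add: assumes x: "x \<in> C" and y: "y \<in> C" shows "\<parallel>x \<oplus> y\<parallel> \<le> \<parallel>x\<parallel> + \<parallel>y\<parallel>"
proof -
  have "\<parallel>x \<oplus> y\<parallel>^2 = Re \<langle>x,x\<rangle> + Re \<langle>x,y\<rangle> + Re \<langle>y,x\<rangle> + Re \<langle>y,y\<rangle>"
    using norm_sq[of "x \<oplus> y"] x y by simp
  also have "\<dots> \<le> \<parallel>x\<parallel>^2 + 2 * (\<parallel>x\<parallel> * \<parallel>y\<parallel>) + \<parallel>y\<parallel>^2"
  proof -
    have "Re \<langle>x,y\<rangle> \<le> \<parallel>x\<parallel> * \<parallel>y\<parallel>" using CS[OF y x] complex_Re_le_cmod[of "\<langle>x,y\<rangle>"] by (simp add: mult.commute)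
    moreover have "Re \<langle>y,x\<rangle> \<le> \<parallel>x\<parallel> * \<parallel>y\<parallel>" using CS[OF x y] complex_Re_le_cmod[of "\<langle>y,x\<rangle>"] by simp
    ultimately show ?thesis using norm_sq[OF x] norm_sq[OF y] by simp
  qed
  also have "\<dots> = (\<parallel>x\<parallel> + \<parallel>y\<parallel>)^2" by (simp add: power2_sum)
  finally show ?thesis by (rule power2_le_imp_le) (simp add: x y)
qed

lemma norm_scl: "x \<in> C \<Longrightarrow> \<parallel>c \<cdot> x\<parallel> = cmod c * \<parallel>x\<parallel>"
proof -
  assume x: "x \<in> C"
  have "\<langle>c \<cdot> x, c \<cdot> x\<rangle> = (c * cnj c) * \<langle>x,x\<rangle>" using x by (simp add: algebra_simps)
  also have "\<dots> = complex_of_real ((cmod c)^2) * \<langle>x,x\<rangle>" using complex_norm_square[of c] by (simp only:)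
  finally have e: "\<langle>c \<cdot> x, c \<cdot> x\<rangle> = complex_of_real ((cmod c)^2) * \<langle>x,x\<rangle>" .
  have r: "\<And>r w. Re (complex_of_real r * w) = r * Re w" by simp
  have "\<parallel>c \<cdot> x\<parallel>^2 = (cmod c)^2 * Re \<langle>x,x\<rangle>" using norm_sq[of "c \<cdot> x"] x by (simp only: e r scl_in)
  also have "\<dots> = (cmod c * \<parallel>x\<parallel>)^2" using norm_sq[OF x] by (simp add: power_mult_distrib)
  finally show ?thesis by (rule power2_eq_imp_eq) (simp_all add: x)
qed

lemma norm_zero_eq: "x \<in> C \<Longrightarrow> \<parallel>x\<parallel> = 0 \<Longrightarrow> x = z"
  using norm_sq[of x] inner_self_real[of x] inner_eq0[of x] by simp

lemma norm_zero[simp]: "\<parallel>z\<parallel> = 0" unfolding hs_norm_def by simp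

lemma sub_sym_eq: "x \<in> C \<Longrightarrow> y \<in> C \<Longrightarrow> y \<ominus> x = (-1) \<cdot> (x \<ominus> y)"
  by (rule hs_eqI) (simp_all add: algebra_simps)

lemma norm_sub_sym: "x \<in> C \<Longrightarrow> y \<in> C \<Longrightarrow> \<parallel>y \<ominus> x\<parallel> = \<parallel>x \<ominus> y\<parallel>"
  using sub_sym_eq[of x y] norm_scl[of "x \<ominus> y" "-1"] by simp

lemma norm_sub_tri: assumes "x \<in> C" "y \<in> C" "w \<in> C" shows "\<parallel>x \<ominus> w\<parallel> \<le> \<parallel>x \<ominus> y\<parallel> + \<parallel>y \<ominus> w\<parallel>"
proof -
  have "x \<ominus> w = (x \<ominus> y) \<oplus> (y \<ominus> w)" by (rule hs_eqI) (use assms in \<open>simp_all add: algebra_simps\<close>)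
  thus ?thesis using norm_add[of "x \<ominus> y" "y \<ominus> w"] assms by simp
qed

lemma sub_self[simp]: "x \<in> C \<Longrightarrow> x \<ominus> x = z"
  by (rule inner_eq0) simp_all


lemma sub_zero_right[simp]: "x \<in> C \<Longrightarrow> x \<ominus> z = x"
  by (rule hs_eqI) simp_all

lemma ht_in: "hs_tendsto H s l \<Longrightarrow> l \<in> C" unfolding hs_tendsto_def by simp

lemma ht_unique: assumes s: "\<And>n. s n \<in> C" and a: "hs_tendsto H s l" and b: "hs_tendsto H s l'"
  shows "l = l'"
proof -
  have l: "l \<in> C" "l' \<in> C" using a b ht_in by auto
  have "(\<lambda>n. \<parallel>s n \<ominus> l\<parallel> + \<parallel>s n \<ominus> l'\<parallel>) \<longlonglongrightarrow> 0 + 0"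
    using a b unfolding hs_tendsto_def by (intro tendsto_add) auto
  moreover have "\<And>n. \<parallel>l \<ominus> l'\<parallel> \<le> \<parallel>s n \<ominus> l\<parallel> + \<parallel>s n \<ominus> l'\<parallel>"
    using norm_sub_tri[of l "s _" l'] norm_sub_sym[of l "s _"] s l by simp
  ultimately have "\<parallel>l \<ominus> l'\<parallel> \<le> 0"
    by (intro LIMSEQ_le_const) auto
  hence "\<parallel>l \<ominus> l'\<parallel> = 0" using norm_nonneg[OF sub_in[OF l(1) l(2)]] by linarith
  hence "l \<ominus> l' = z" using l by (intro norm_zero_eq) simp_all
  thus ?thesis using sub_zero_eq l by simp
qed

lemma lim_eq: "(\<And>n. s n \<in> C) \<Longrightarrow> hs_tendsto H s l \<Longrightarrow> hs_lim H s = l"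
  unfolding hs_lim_def by (rule the_equality) (auto intro: ht_unique)

lemma ht_lim: "(\<And>n. s n \<in> C) \<Longrightarrow> hs_cauchy H s \<Longrightarrow> hs_tendsto H s (hs_lim H s)"
  using complete lim_eq by metis

lemma ht_close: assumes "hs_tendsto H s l" "(\<lambda>n. \<parallel>s n \<ominus> t n\<parallel>) \<longlonglongrightarrow> 0" "\<And>n. s n \<in> C" "\<And>n. t n \<in> C"
  shows "hs_tendsto H t l"
proof -
  have l: "l \<in> C" using assms ht_in by auto
  have "(\<lambda>n. \<parallel>s n \<ominus> t n\<parallel> + \<parallel>s n \<ominus> l\<parallel>) \<longlonglongrightarrow> 0"
    using assms unfolding hs_tendsto_def by (intro tendsto_add_zero) auto
  hence "(\<lambda>n. \<parallel>t n \<ominus> l\<parallel>) \<longlonglongrightarrow> 0"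
    apply (rule squeeze0[rotated 2])
    using norm_sub_tri[of "t _" "s _" l] norm_sub_sym[of "t _" "s _"] l assms(3,4) by auto
  thus ?thesis using l unfolding hs_tendsto_def by simp
qed

lemma ht_cauchy: assumes "hs_tendsto H s l" "\<And>n. s n \<in> C" shows "hs_cauchy H s"
  unfolding hs_cauchy_def
proof (intro allI impI)
  fix e :: real assume e: "e > 0"
  have l: "l \<in> C" using assms ht_in by auto
  from assms(1) have "(\<lambda>n. \<parallel>s n \<ominus> l\<parallel>) \<longlonglongrightarrow> 0" unfolding hs_tendsto_def by simp
  then obtain N where N: "\<And>n. n \<ge> N \<Longrightarrow> \<parallel>s n \<ominus> l\<parallel> < e/2"
    using e unfolding LIMSEQ_def by (metis half_gt_zero dist_real_def diff_zero abs_of_nonneg norm_nonneg l assms(2) sub_in real_norm_def)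
  show "\<exists>N. \<forall>m\<ge>N. \<forall>n\<ge>N. \<parallel>s m \<ominus> s n\<parallel> < e"
  proof (intro exI allI impI)
    fix m n assume "m \<ge> N" "n \<ge> N"
    thus "\<parallel>s m \<ominus> s n\<parallel> < e" using N[of m] N[of n] norm_sub_tri[of "s m" l "s n"] norm_sub_sym[of l "s n"] l assms(2)
      by fastforce
  qed
qed

lemma ht_norm: assumes "hs_tendsto H s l" "\<And>n. s n \<in> C" shows "(\<lambda>n. \<parallel>s n\<parallel>) \<longlonglongrightarrow> \<parallel>l\<parallel>"
proof -
  have l: "l \<in> C" using assms ht_in by auto
  have d: "(\<lambda>n. \<parallel>s n \<ominus> l\<parallel>) \<longlonglongrightarrow> 0" using assms unfolding hs_tendsto_def by simp
  have "\<And>n. \<bar>\<parallel>s n\<parallel> - \<parallel>l\<parallel>\<bar> \<le> \<parallel>s n \<ominus> l\<parallel>"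
  proof -
    fix n
    have 1: "\<parallel>s n\<parallel> \<le> \<parallel>s n \<ominus> l\<parallel> + \<parallel>l\<parallel>"
      using norm_sub_tri[of "s n" l z] assms l by simp
    have 2: "\<parallel>l\<parallel> \<le> \<parallel>s n \<ominus> l\<parallel> + \<parallel>s n\<parallel>"
      using norm_sub_tri[of l "s n" z] assms l norm_sub_sym[of "s n" l] by simp
    show "\<bar>\<parallel>s n\<parallel> - \<parallel>l\<parallel>\<bar> \<le> \<parallel>s n \<ominus> l\<parallel>" using 1 2 by linarith
  qed
  hence "(\<lambda>n. \<bar>\<parallel>s n\<parallel> - \<parallel>l\<parallel>\<bar>) \<longlonglongrightarrow> 0" by (intro squeeze0[OF _ _ d]) auto
  thus ?thesis by (simp add: LIMSEQ_def dist_real_def)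
qed


lemma ht_inner: assumes s: "hs_tendsto H s l" "\<And>n. s n \<in> C" and t: "hs_tendsto H t m" "\<And>n. t n \<in> C"
  shows "(\<lambda>n. \<langle>s n, t n\<rangle>) \<longlonglongrightarrow> \<langle>l, m\<rangle>"
proof -
  have l: "l \<in> C" "m \<in> C" using s t ht_in by auto
  have ds: "(\<lambda>n. \<parallel>s n \<ominus> l\<parallel>) \<longlonglongrightarrow> 0" and dt: "(\<lambda>n. \<parallel>t n \<ominus> m\<parallel>) \<longlonglongrightarrow> 0"
    using s t unfolding hs_tendsto_def by auto
  have b: "(\<lambda>n. \<parallel>s n \<ominus> l\<parallel> * (\<parallel>t n \<ominus> m\<parallel> + \<parallel>m\<parallel>) + \<parallel>l\<parallel> * \<parallel>t n \<ominus> m\<parallel>) \<longlonglongrightarrow> 0 * (0 + \<parallel>m\<parallel>) + \<parallel>l\<parallel> * 0"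
    by (intro tendsto_intros ds dt)
  have e: "\<And>n. \<langle>s n, t n\<rangle> - \<langle>l, m\<rangle> = \<langle>s n \<ominus> l, t n\<rangle> + \<langle>l, t n \<ominus> m\<rangle>"
    using s t l by simp
  have bd: "\<And>n. cmod (\<langle>s n, t n\<rangle> - \<langle>l, m\<rangle>) \<le> \<parallel>s n \<ominus> l\<parallel> * (\<parallel>t n \<ominus> m\<parallel> + \<parallel>m\<parallel>) + \<parallel>l\<parallel> * \<parallel>t n \<ominus> m\<parallel>"
  proof -
    fix n
    have 1: "cmod \<langle>s n \<ominus> l, t n\<rangle> \<le> \<parallel>t n\<parallel> * \<parallel>s n \<ominus> l\<parallel>" using CS[OF t(2) sub_in[OF s(2) l(1)]] .
    have 2: "cmod \<langle>l, t n \<ominus> m\<rangle> \<le> \<parallel>l\<parallel> * \<parallel>t n \<ominus> m\<parallel>" using CS[OF sub_in[OF t(2) l(2)] l(1)] by (simp only: mult.commute)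
    have 3: "\<parallel>t n\<parallel> \<le> \<parallel>t n \<ominus> m\<parallel> + \<parallel>m\<parallel>" using norm_sub_tri[OF t(2) l(2) zero_in] sub_zero_right[OF t(2)] sub_zero_right[OF l(2)] by simp
    have 4: "\<parallel>t n\<parallel> * \<parallel>s n \<ominus> l\<parallel> \<le> (\<parallel>t n \<ominus> m\<parallel> + \<parallel>m\<parallel>) * \<parallel>s n \<ominus> l\<parallel>"
      using 3 s l by (intro mult_right_mono) auto
    have 5: "(\<parallel>t n \<ominus> m\<parallel> + \<parallel>m\<parallel>) * \<parallel>s n \<ominus> l\<parallel> = \<parallel>s n \<ominus> l\<parallel> * (\<parallel>t n \<ominus> m\<parallel> + \<parallel>m\<parallel>)" by simp
    show "?thesis n" unfolding e using norm_triangle_ineq[of "\<langle>s n \<ominus> l, t n\<rangle>" "\<langle>l, t n \<ominus> m\<rangle>"] 1 2 4 5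
      by linarith
  qed
  moreover have b': "(\<lambda>n. \<parallel>s n \<ominus> l\<parallel> * (\<parallel>t n \<ominus> m\<parallel> + \<parallel>m\<parallel>) + \<parallel>l\<parallel> * \<parallel>t n \<ominus> m\<parallel>) \<longlonglongrightarrow> 0"
    using b by simp
  have "(\<lambda>n. cmod (\<langle>s n, t n\<rangle> - \<langle>l, m\<rangle>)) \<longlonglongrightarrow> 0"
    by (rule squeeze0[OF norm_ge_zero bd b'])
  thus ?thesis by (simp add: tendsto_norm_zero_iff LIM_zero_iff)
qed

lemma ht_add: assumes s: "hs_tendsto H s l" "\<And>n. s n \<in> C" and t: "hs_tendsto H t m" "\<And>n. t n \<in> C"
  shows "hs_tendsto H (\<lambda>n. s n \<oplus> t n) (l \<oplus> m)"
proof -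
  have l: "l \<in> C" "m \<in> C" using s t ht_in by auto
  have b: "(\<lambda>n. \<parallel>s n \<ominus> l\<parallel> + \<parallel>t n \<ominus> m\<parallel>) \<longlonglongrightarrow> 0"
    using s(1) t(1) unfolding hs_tendsto_def by (intro tendsto_add_zero) auto
  have bd: "\<And>n. \<parallel>(s n \<oplus> t n) \<ominus> (l \<oplus> m)\<parallel> \<le> \<parallel>s n \<ominus> l\<parallel> + \<parallel>t n \<ominus> m\<parallel>"
  proof -
    fix n
    have "(s n \<oplus> t n) \<ominus> (l \<oplus> m) = (s n \<ominus> l) \<oplus> (t n \<ominus> m)"
      by (rule hs_eqI) (use s t l in \<open>simp_all add: algebra_simps\<close>)
    thus "?thesis n" using norm_add[of "s n \<ominus> l" "t n \<ominus> m"] s t l by simp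
  qed
  have "(\<lambda>n. \<parallel>(s n \<oplus> t n) \<ominus> (l \<oplus> m)\<parallel>) \<longlonglongrightarrow> 0"
    by (rule squeeze0[OF norm_nonneg[OF sub_in[OF add_in[OF s(2) t(2)] add_in[OF l]]] bd b])
  thus ?thesis unfolding hs_tendsto_def using l by simp
qed

lemma ht_scl: assumes s: "hs_tendsto H s l" "\<And>n. s n \<in> C"
  shows "hs_tendsto H (\<lambda>n. c \<cdot> s n) (c \<cdot> l)"
proof -
  have l: "l \<in> C" using s ht_in by auto
  have "(\<lambda>n. cmod c * \<parallel>s n \<ominus> l\<parallel>) \<longlonglongrightarrow> cmod c * 0"
    using s unfolding hs_tendsto_def by (intro tendsto_intros) auto
  moreover have "\<And>n. \<parallel>c \<cdot> s n \<ominus> c \<cdot> l\<parallel> = cmod c * \<parallel>s n \<ominus> l\<parallel>"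
  proof -
    fix n
    have "c \<cdot> s n \<ominus> c \<cdot> l = c \<cdot> (s n \<ominus> l)"
      by (rule hs_eqI) (use s l in \<open>simp_all add: algebra_simps\<close>)
    thus "?thesis n" using norm_scl[of "s n \<ominus> l" c] s l by simp
  qed
  ultimately show ?thesis unfolding hs_tendsto_def using l by simp
qed

lemma ht_sub: assumes s: "hs_tendsto H s l" "\<And>n. s n \<in> C" and t: "hs_tendsto H t m" "\<And>n. t n \<in> C"
  shows "hs_tendsto H (\<lambda>n. s n \<ominus> t n) (l \<ominus> m)"
  unfolding hs_sub_def by (intro ht_add ht_scl assms) (use t in simp)

lemma ht_const: "l \<in> C \<Longrightarrow> hs_tendsto H (\<lambda>n. l) l"
  unfolding hs_tendsto_def by simp


lemma parallelogram:
  assumes "y \<in> C" "a \<in> C" "b \<in> C"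
  shows "\<parallel>a \<ominus> b\<parallel>^2 = 2 * \<parallel>y \<ominus> a\<parallel>^2 + 2 * \<parallel>y \<ominus> b\<parallel>^2 - 4 * \<parallel>y \<ominus> (1/2) \<cdot> (a \<oplus> b)\<parallel>^2"
proof -
  have "\<langle>a \<ominus> b, a \<ominus> b\<rangle> = 2 * \<langle>y \<ominus> a, y \<ominus> a\<rangle> + 2 * \<langle>y \<ominus> b, y \<ominus> b\<rangle> - 4 * \<langle>y \<ominus> (1/2) \<cdot> (a \<oplus> b), y \<ominus> (1/2) \<cdot> (a \<oplus> b)\<rangle>"
    using assms by (simp add: algebra_simps)
  hence "Re \<langle>a \<ominus> b, a \<ominus> b\<rangle> = 2 * Re \<langle>y \<ominus> a, y \<ominus> a\<rangle> + 2 * Re \<langle>y \<ominus> b, y \<ominus> b\<rangle> - 4 * Re \<langle>y \<ominus> (1/2) \<cdot> (a \<oplus> b), y \<ominus> (1/2) \<cdot> (a \<oplus> b)\<rangle>"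
    by simp
  thus ?thesis using assms by (simp add: norm_sq)
qed

lemma proj:
  assumes KC: "K \<subseteq> C" and zK: "z \<in> K" and addK: "\<And>x y. x \<in> K \<Longrightarrow> y \<in> K \<Longrightarrow> x \<oplus> y \<in> K"
    and sclK: "\<And>c x. x \<in> K \<Longrightarrow> c \<cdot> x \<in> K"
    and clK: "\<And>s l. (\<And>n. s n \<in> K) \<Longrightarrow> hs_tendsto H s l \<Longrightarrow> l \<in> K"
    and y: "y \<in> C"
  shows "\<exists>k\<in>K. \<forall>w\<in>K. \<langle>w, y \<ominus> k\<rangle> = 0"
proof -
  define D where "D = (\<lambda>w. \<parallel>y \<ominus> w\<parallel>) ` K"
  define d where "d = Inf D"
  have Dne: "D \<noteq> {}" unfolding D_def using zK by auto
  have Dbd: "bdd_below D" unfolding D_def bdd_below_def using KC y by (intro exI[of _ 0]) auto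
  have dle: "\<And>w. w \<in> K \<Longrightarrow> d \<le> \<parallel>y \<ominus> w\<parallel>" unfolding d_def D_def
    using Dbd unfolding D_def by (intro cInf_lower) auto
  have d0: "d \<ge> 0" using dle[OF zK] y unfolding d_def
    using Dne Dbd KC y unfolding D_def by (intro cInf_greatest) auto
  have "\<forall>n. \<exists>w. w \<in> K \<and> \<parallel>y \<ominus> w\<parallel> < d + 1 / (real n + 1)"
  proof
    fix n
    have "Inf D < d + 1 / (real n + 1)" unfolding d_def by simp
    then obtain t where "t \<in> D" "t < d + 1 / (real n + 1)" using cInf_less_iff[OF Dne Dbd] by auto
    thus "\<exists>w. w \<in> K \<and> \<parallel>y \<ominus> w\<parallel> < d + 1 / (real n + 1)" unfolding D_def by auto
  qed
  then obtain w where wK: "\<And>n. w n \<in> K" and wd: "\<And>n. \<parallel>y \<ominus> w n\<parallel> < d + 1 / (real n + 1)"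
    by metis
  have wC: "\<And>n. w n \<in> C" using wK KC by auto
  have cau: "hs_cauchy H w" unfolding hs_cauchy_def
  proof (intro allI impI)
    fix e :: real assume e: "e > 0"
    obtain N :: nat where N: "(8 * d + 4) / e^2 < real N" using reals_Archimedean2 by blast
    have NN: "(8 * d + 4) / (real N + 1) < e^2"
    proof -
      have "(8 * d + 4) < e^2 * real N" using N e by (simp add: field_simps)
      also have "\<dots> \<le> e^2 * (real N + 1)" using e by simp
      finally show ?thesis by (simp add: field_simps)
    qed
    show "\<exists>N. \<forall>m\<ge>N. \<forall>n\<ge>N. \<parallel>w m \<ominus> w n\<parallel> < e"
    proof (intro exI allI impI)
      fix m n assume mN: "m \<ge> N" and nN: "n \<ge> N"
      define em where "em = 1 / (real m + 1)"
      define en where "en = 1 / (real n + 1)"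
      define eN where "eN = 1 / (real N + 1)"
      have emN: "0 \<le> em" "em \<le> eN" unfolding em_def eN_def using mN by (auto simp: frac_le)
      have enN: "0 \<le> en" "en \<le> eN" unfolding en_def eN_def using nN by (auto simp: frac_le)
      have eN1: "eN \<le> 1" unfolding eN_def by simp
      have mid: "d \<le> \<parallel>y \<ominus> (1/2) \<cdot> (w m \<oplus> w n)\<parallel>" using dle addK sclK wK by blast
      have sm: "\<parallel>y \<ominus> w m\<parallel>^2 \<le> (d + em)^2" using wd[of m] dle[OF wK[of m]] d0 unfolding em_def
        by (intro power_mono) auto
      have sn: "\<parallel>y \<ominus> w n\<parallel>^2 \<le> (d + en)^2" using wd[of n] dle[OF wK[of n]] d0 unfolding en_def
        by (intro power_mono) auto
      have smid: "d^2 \<le> \<parallel>y \<ominus> (1/2) \<cdot> (w m \<oplus> w n)\<parallel>^2" using mid d0 by (intro power_mono) auto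
      have "\<parallel>w m \<ominus> w n\<parallel>^2 \<le> 2 * (d + em)^2 + 2 * (d + en)^2 - 4 * d^2"
        using parallelogram[OF y wC[of m] wC[of n]] sm sn smid by linarith
      also have "\<dots> = 4 * d * (em + en) + 2 * em^2 + 2 * en^2" by (simp add: power2_eq_square algebra_simps)
      also have "\<dots> \<le> 4 * d * (2 * eN) + 2 * eN + 2 * eN"
      proof -
        have "em^2 \<le> eN" using emN eN1 by (simp add: power2_eq_square) (meson mult_le_one order_trans mult_right_le_one_le)
        moreover have "en^2 \<le> eN" using enN eN1 by (simp add: power2_eq_square) (meson mult_le_one order_trans mult_right_le_one_le)
        moreover have "4 * d * (em + en) \<le> 4 * d * (2 * eN)" using emN enN d0 by (intro mult_left_mono) auto
        ultimately show ?thesis by linarith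
      qed
      also have "\<dots> = (8 * d + 4) * eN" by (simp add: algebra_simps)
      also have "\<dots> = (8 * d + 4) / (real N + 1)" unfolding eN_def by simp
      also have "\<dots> < e^2" by (rule NN)
      finally show "\<parallel>w m \<ominus> w n\<parallel> < e" using e by (simp add: power_less_imp_less_base)
    qed
  qed
  obtain k where k: "hs_tendsto H w k" using complete[of w] wC cau by blast
  have kK: "k \<in> K" using clK[OF wK k] .
  have kC: "k \<in> C" using kK KC by auto
  have kmin: "\<And>v. v \<in> K \<Longrightarrow> \<parallel>y \<ominus> k\<parallel> \<le> \<parallel>y \<ominus> v\<parallel>"
  proof -
    fix v assume v: "v \<in> K"
    have bd: "\<And>n. \<parallel>y \<ominus> k\<parallel> \<le> d + 1 / (real n + 1) + \<parallel>w n \<ominus> k\<parallel>"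
      using norm_sub_tri[OF y wC kC] wd by (smt (verit))
    have lim0: "(\<lambda>n. d + 1 / (real n + 1) + \<parallel>w n \<ominus> k\<parallel>) \<longlonglongrightarrow> d + 0 + 0"
      using k unfolding hs_tendsto_def by (intro tendsto_intros inv_lim) auto
    hence lim: "(\<lambda>n. d + 1 / (real n + 1) + \<parallel>w n \<ominus> k\<parallel>) \<longlonglongrightarrow> d" by simp
    have "\<parallel>y \<ominus> k\<parallel> \<le> d" by (rule LIMSEQ_le_const[OF lim]) (use bd in blast)
    thus "\<parallel>y \<ominus> k\<parallel> \<le> \<parallel>y \<ominus> v\<parallel>" using dle[OF v] by linarith
  qed
  show ?thesis
  proof (intro bexI[OF _ kK] ballI)
    fix v assume v: "v \<in> K"
    have vC: "v \<in> C" using v KC by auto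
    define u where "u = y \<ominus> k"
    define b where "b = \<langle>v, u\<rangle>"
    have uC: "u \<in> C" unfolding u_def using y kC by simp
    have uv: "\<langle>u, v\<rangle> = cnj b" unfolding b_def using inner_sym[OF vC uC] .
    define W where "W = Re \<langle>v,v\<rangle>"
    have W0: "W \<ge> 0" unfolding W_def using inner_pos[OF vC] .
    have vv: "\<langle>v,v\<rangle> = complex_of_real W" unfolding W_def using inner_self_real[OF vC] .
    have key: "\<And>t::real. t > 0 \<Longrightarrow> 2 * t * (cmod b)^2 \<le> t^2 * (cmod b)^2 * W"
    proof -
      fix t :: real assume t: "t > 0"
      define c where "c = complex_of_real t * b"
      have nb: "cmod b * cmod b = Re b * Re b + Im b * Im b" using cmod_power2[of b] by (simp add: power2_eq_square)
      have "k \<oplus> c \<cdot> v \<in> K" using addK[OF kK sclK[OF v]] .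
      hence "\<parallel>u\<parallel> \<le> \<parallel>y \<ominus> (k \<oplus> c \<cdot> v)\<parallel>" using kmin unfolding u_def by blast
      hence "\<parallel>u\<parallel>^2 \<le> \<parallel>y \<ominus> (k \<oplus> c \<cdot> v)\<parallel>^2" using uC by (intro power_mono) auto
      moreover have "\<langle>y \<ominus> (k \<oplus> c \<cdot> v), y \<ominus> (k \<oplus> c \<cdot> v)\<rangle> = \<langle>u,u\<rangle> - c * \<langle>u,v\<rangle> - cnj c * \<langle>v,u\<rangle> + cnj c * c * \<langle>v,v\<rangle>"
        unfolding u_def using y kC vC by (simp add: algebra_simps)
      moreover have "c * \<langle>u,v\<rangle> = complex_of_real (t * (cmod b)^2)"
        unfolding uv c_def by (simp add: complex_eq_iff nb algebra_simps power2_eq_square)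
      moreover have "cnj c * \<langle>v,u\<rangle> = complex_of_real (t * (cmod b)^2)"
        unfolding b_def[symmetric] c_def by (simp add: complex_eq_iff nb algebra_simps power2_eq_square)
      moreover have "cnj c * c * \<langle>v,v\<rangle> = complex_of_real (t^2 * (cmod b)^2 * W)"
        unfolding vv c_def by (simp add: complex_eq_iff nb algebra_simps power2_eq_square)
      ultimately have "\<parallel>u\<parallel>^2 \<le> Re \<langle>u,u\<rangle> - 2 * (t * (cmod b)^2) + t^2 * (cmod b)^2 * W"
        using norm_sq[of "y \<ominus> (k \<oplus> c \<cdot> v)"] y kC vC by simp
      thus "2 * t * (cmod b)^2 \<le> t^2 * (cmod b)^2 * W" using norm_sq[OF uC] by simp
    qed
    define t where "t = 1 / (W + 1)"
    have t0: "t > 0" unfolding t_def using W0 by simp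
    have "2 * t * (cmod b)^2 \<le> t^2 * (cmod b)^2 * W" using key[OF t0] .
    hence "2 * (cmod b)^2 \<le> t * (cmod b)^2 * W" using t0 by (simp add: power2_eq_square algebra_simps)
    moreover have "t * W \<le> 1" unfolding t_def using W0 by (simp add: field_simps)
    hence "(t * W) * (cmod b)^2 \<le> 1 * (cmod b)^2" by (rule mult_right_mono) simp
    moreover have "t * (cmod b)^2 * W = (t * W) * (cmod b)^2" by simp
    ultimately have "2 * (cmod b)^2 \<le> (cmod b)^2" by linarith
    hence "cmod b = 0" by simp
    thus "\<langle>v, y \<ominus> k\<rangle> = 0" unfolding b_def u_def by simp
  qed
qed

end

lemma bl_facts:
  assumes "hs_bounded_linear H K T"
  shows "\<And>x. x \<in> hs_carrier H \<Longrightarrow> T x \<in> hs_carrier K"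
    "\<And>x y. x \<in> hs_carrier H \<Longrightarrow> y \<in> hs_carrier H \<Longrightarrow> T (hs_add H x y) = hs_add K (T x) (T y)"
    "\<And>c x. x \<in> hs_carrier H \<Longrightarrow> T (hs_scale H c x) = hs_scale K c (T x)"
    "\<exists>B. \<forall>x\<in>hs_carrier H. hs_norm K (T x) \<le> B * hs_norm H x"
  using assms unfolding hs_bounded_linear_def by blast+

lemma bl_sub: "hs_bounded_linear H K T \<Longrightarrow> hilbert_space H \<Longrightarrow> x \<in> hs_carrier H \<Longrightarrow> y \<in> hs_carrier H \<Longrightarrow>
   T (hs_sub H x y) = hs_sub K (T x) (T y)"
proof -
  assume a: "hs_bounded_linear H K T" "hilbert_space H" "x \<in> hs_carrier H" "y \<in> hs_carrier H"
  have "hs_scale H (-1) y \<in> hs_carrier H" using hs.scl_in[OF hs.intro[OF a(2)] a(4)] .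
  thus ?thesis unfolding hs_sub_def using bl_facts(2,3)[OF a(1)] a by simp
qed

lemma bl_tendsto:
  assumes HH: "hilbert_space H" and KK: "hilbert_space K" and T: "hs_bounded_linear H K T"
    and s: "\<And>n. s n \<in> hs_carrier H" and t: "hs_tendsto H s l"
  shows "hs_tendsto K (\<lambda>n. T (s n)) (T l)"
proof -
  interpret h: hs H by (rule hs.intro[OF HH])
  interpret k: hs K by (rule hs.intro[OF KK])
  have l: "l \<in> hs_carrier H" using t h.ht_in by blast
  obtain B where B: "\<And>x. x \<in> hs_carrier H \<Longrightarrow> hs_norm K (T x) \<le> B * hs_norm H x" using bl_facts(4)[OF T] by blast
  have e: "\<And>n. hs_sub K (T (s n)) (T l) = T (hs_sub H (s n) l)" using bl_sub[OF T HH s l] by simp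
  have d: "(\<lambda>n. hs_norm H (hs_sub H (s n) l)) \<longlonglongrightarrow> 0" using t unfolding hs_tendsto_def by simp
  have b: "(\<lambda>n. B * hs_norm H (hs_sub H (s n) l)) \<longlonglongrightarrow> 0" using tendsto_mult_right_zero[OF d] .
  have "(\<lambda>n. hs_norm K (hs_sub K (T (s n)) (T l))) \<longlonglongrightarrow> 0"
    unfolding e by (rule squeeze0[OF k.norm_nonneg[OF bl_facts(1)[OF T h.sub_in[OF s l]]] B[OF h.sub_in[OF s l]] b])
  thus ?thesis unfolding hs_tendsto_def using bl_facts(1)[OF T l] by simp
qed


lemma lim0_ev: assumes "f \<longlonglongrightarrow> (0::real)" "e > 0" shows "\<exists>N. \<forall>n\<ge>N. f n < e"
proof -
  obtain N where "\<forall>n\<ge>N. norm (f n - 0) < e" using assms LIMSEQ_iff by metis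
  thus ?thesis by (metis abs_less_iff diff_zero real_norm_def)
qed

locale gnsloc = hs H for H :: "'h hilb" +
  fixes A :: "'a cstar_alg" and \<omega> :: "'a \<Rightarrow> complex" and \<psi> :: "'a \<Rightarrow> 'h"
  assumes psi_in[simp]: "\<psi> a \<in> C"
    and psi_add: "\<psi> (ca_add A a b) = \<psi> a \<oplus> \<psi> b"
    and psi_scl: "\<psi> (ca_scale A c a) = c \<cdot> \<psi> a"
    and psi_zero: "\<psi> (ca_zero A) = z"
    and om: "\<omega> (ca_mul A (ca_star A a) b) = \<langle>\<psi> a, \<psi> b\<rangle>"
begin

abbreviation "G \<equiv> gns_space A \<omega>"
abbreviation "GC \<equiv> hs_carrier G"
abbreviation "cls \<equiv> gns_class A \<omega>"
abbreviation "cau \<equiv> gns_cauchy A \<omega>"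

lemma psi_sub: "\<psi> (ca_sub A a b) = \<psi> a \<ominus> \<psi> b"
  unfolding ca_sub_def hs_sub_def by (simp add: psi_add psi_scl)

lemma p_eq: "gns_p A \<omega> a = \<parallel>\<psi> a\<parallel>"
  unfolding gns_p_def hs_norm_def om ..

lemma cau_iff: "cau x \<longleftrightarrow> hs_cauchy H (\<lambda>n. \<psi> (x n))"
  unfolding gns_cauchy_def hs_cauchy_def p_eq psi_sub ..

definition lm :: "(nat \<Rightarrow> 'a) \<Rightarrow> 'h" where "lm x = hs_lim H (\<lambda>n. \<psi> (x n))"

lemma lm_tendsto: "cau x \<Longrightarrow> hs_tendsto H (\<lambda>n. \<psi> (x n)) (lm x)"
  unfolding lm_def cau_iff by (rule ht_lim) simp_all

lemma lm_in: "cau x \<Longrightarrow> lm x \<in> C"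
  using lm_tendsto ht_in by blast

lemma cls_mem: "y \<in> cls x \<longleftrightarrow> cau y \<and> (\<lambda>n. \<parallel>\<psi> (x n) \<ominus> \<psi> (y n)\<parallel>) \<longlonglongrightarrow> 0"
  unfolding gns_class_def p_eq psi_sub by simp

lemma cls_mem_lm: assumes x: "cau x" shows "y \<in> cls x \<longleftrightarrow> cau y \<and> lm y = lm x"
proof
  assume "y \<in> cls x"
  hence y: "cau y" and d: "(\<lambda>n. \<parallel>\<psi> (x n) \<ominus> \<psi> (y n)\<parallel>) \<longlonglongrightarrow> 0" unfolding cls_mem by auto
  have "hs_tendsto H (\<lambda>n. \<psi> (y n)) (lm x)" using ht_close[OF lm_tendsto[OF x] d] by simp
  hence "lm y = lm x" using lm_tendsto[OF y] ht_unique[of "\<lambda>n. \<psi> (y n)"] by simp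
  thus "cau y \<and> lm y = lm x" using y by simp
next
  assume a: "cau y \<and> lm y = lm x"
  have tx: "(\<lambda>n. \<parallel>\<psi> (x n) \<ominus> lm x\<parallel>) \<longlonglongrightarrow> 0" using lm_tendsto[OF x] unfolding hs_tendsto_def by simp
  have ty: "(\<lambda>n. \<parallel>\<psi> (y n) \<ominus> lm x\<parallel>) \<longlonglongrightarrow> 0" using lm_tendsto[of y] a unfolding hs_tendsto_def by simp
  have l: "lm x \<in> C" using lm_in[OF x] .
  have b: "(\<lambda>n. \<parallel>\<psi> (x n) \<ominus> lm x\<parallel> + \<parallel>\<psi> (y n) \<ominus> lm x\<parallel>) \<longlonglongrightarrow> 0" using tx ty by (rule tendsto_add_zero)
  have bd: "\<And>n. \<parallel>\<psi> (x n) \<ominus> \<psi> (y n)\<parallel> \<le> \<parallel>\<psi> (x n) \<ominus> lm x\<parallel> + \<parallel>\<psi> (y n) \<ominus> lm x\<parallel>"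
    using norm_sub_tri[OF psi_in l psi_in] norm_sub_sym[OF psi_in l] by simp
  have "(\<lambda>n. \<parallel>\<psi> (x n) \<ominus> \<psi> (y n)\<parallel>) \<longlonglongrightarrow> 0"
    by (rule squeeze0[OF norm_nonneg[OF sub_in[OF psi_in psi_in]] bd b])
  thus "y \<in> cls x" unfolding cls_mem using a by simp
qed

lemma cls_self: "cau x \<Longrightarrow> x \<in> cls x" using cls_mem_lm by simp

lemma cls_eq: assumes "cau x" "cau y" shows "cls x = cls y \<longleftrightarrow> lm x = lm y"
proof
  assume "cls x = cls y" thus "lm x = lm y" using cls_self[OF assms(1)] cls_mem_lm[OF assms(2)] by auto
next
  assume "lm x = lm y" thus "cls x = cls y" using cls_mem_lm[OF assms(1)] cls_mem_lm[OF assms(2)] by auto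
qed

lemma GC_eq: "GC = {cls x | x. cau x}" unfolding gns_space_def by simp

lemma rep_mem: assumes "cau x" shows "gns_rep (cls x) \<in> cls x"
  unfolding gns_rep_def using cls_self[OF assms] by (rule someI[of "\<lambda>y. y \<in> cls x"])

lemma rep_cau: "cau x \<Longrightarrow> cau (gns_rep (cls x))"
  using rep_mem cls_mem by blast

lemma rep_lm: "cau x \<Longrightarrow> lm (gns_rep (cls x)) = lm x"
  using rep_mem cls_mem_lm by blast

definition Phi :: "(nat \<Rightarrow> 'a) set \<Rightarrow> 'h" where "Phi X = hs_lim H (\<lambda>n. \<psi> (gns_rep X n))"

lemma Phi_cls: "cau x \<Longrightarrow> Phi (cls x) = lm x"
  unfolding Phi_def using rep_lm[unfolded lm_def] by (simp add: lm_def)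

lemma GC_cases: assumes "X \<in> GC" obtains x where "cau x" "X = cls x"
  using assms GC_eq by auto


lemma lm_eq: "hs_tendsto H (\<lambda>n. \<psi> (s n)) l \<Longrightarrow> cau s \<and> lm s = l"
proof -
  assume t: "hs_tendsto H (\<lambda>n. \<psi> (s n)) l"
  have c: "cau s" unfolding cau_iff using ht_cauchy[OF t] by simp
  thus ?thesis using lm_tendsto[OF c] t ht_unique[of "\<lambda>n. \<psi> (s n)"] by simp
qed

lemma of_tendsto: assumes "hs_tendsto H (\<lambda>n. \<psi> (s n)) l"
  shows "cau s" "cls s \<in> GC" "Phi (cls s) = l"
  using lm_eq[OF assms] Phi_cls GC_eq by auto

lemma Phi_rep: assumes "X \<in> GC" shows "cau (gns_rep X)" "hs_tendsto H (\<lambda>n. \<psi> (gns_rep X n)) (Phi X)"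
proof -
  obtain x where x: "cau x" "X = cls x" using assms by (rule GC_cases)
  show c: "cau (gns_rep X)" using rep_cau x by simp
  show "hs_tendsto H (\<lambda>n. \<psi> (gns_rep X n)) (Phi X)" using lm_tendsto[OF c] Phi_cls[OF x(1)] rep_lm[OF x(1)] x(2) by simp
qed

lemma Phi_in: "X \<in> GC \<Longrightarrow> Phi X \<in> C" using Phi_rep ht_in by blast

lemma Phi_inj: assumes "X \<in> GC" "Y \<in> GC" "Phi X = Phi Y" shows "X = Y"
proof -
  obtain x where x: "cau x" "X = cls x" using assms(1) by (rule GC_cases)
  obtain y where y: "cau y" "Y = cls y" using assms(2) by (rule GC_cases)
  show ?thesis using assms(3) x y Phi_cls cls_eq by simp
qed

lemma G_add: assumes "X \<in> GC" "Y \<in> GC"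
  shows "hs_add G X Y \<in> GC" "Phi (hs_add G X Y) = Phi X \<oplus> Phi Y"
proof -
  have e: "hs_add G X Y = cls (\<lambda>n. ca_add A (gns_rep X n) (gns_rep Y n))" unfolding gns_space_def by simp
  have "hs_tendsto H (\<lambda>n. \<psi> (ca_add A (gns_rep X n) (gns_rep Y n))) (Phi X \<oplus> Phi Y)"
    unfolding psi_add by (rule ht_add[OF Phi_rep(2)[OF assms(1)] _ Phi_rep(2)[OF assms(2)]]) simp_all
  thus "hs_add G X Y \<in> GC" "Phi (hs_add G X Y) = Phi X \<oplus> Phi Y" unfolding e using of_tendsto by auto
qed

lemma G_scl: assumes "X \<in> GC"
  shows "hs_scale G c X \<in> GC" "Phi (hs_scale G c X) = c \<cdot> Phi X"
proof -
  have e: "hs_scale G c X = cls (\<lambda>n. ca_scale A c (gns_rep X n))" unfolding gns_space_def by simp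
  have "hs_tendsto H (\<lambda>n. \<psi> (ca_scale A c (gns_rep X n))) (c \<cdot> Phi X)"
    unfolding psi_scl by (rule ht_scl[OF Phi_rep(2)[OF assms(1)]]) simp_all
  thus "hs_scale G c X \<in> GC" "Phi (hs_scale G c X) = c \<cdot> Phi X" unfolding e using of_tendsto by auto
qed

lemma G_zero: "hs_zero G \<in> GC" "Phi (hs_zero G) = z"
proof -
  have e: "hs_zero G = cls (\<lambda>n. ca_zero A)" unfolding gns_space_def by simp
  have "hs_tendsto H (\<lambda>n. \<psi> (ca_zero A)) z" unfolding psi_zero by (rule ht_const) simp
  thus "hs_zero G \<in> GC" "Phi (hs_zero G) = z" unfolding e using of_tendsto by auto
qed

lemma G_sub: assumes "X \<in> GC" "Y \<in> GC"
  shows "hs_sub G X Y \<in> GC" "Phi (hs_sub G X Y) = Phi X \<ominus> Phi Y"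
  unfolding hs_sub_def using G_add G_scl assms by auto

lemma G_inner: assumes "X \<in> GC" "Y \<in> GC" shows "hs_inner G X Y = \<langle>Phi X, Phi Y\<rangle>"
proof -
  have e: "hs_inner G X Y = lim (\<lambda>n. \<langle>\<psi> (gns_rep X n), \<psi> (gns_rep Y n)\<rangle>)" unfolding gns_space_def om by simp
  have "(\<lambda>n. \<langle>\<psi> (gns_rep X n), \<psi> (gns_rep Y n)\<rangle>) \<longlonglongrightarrow> \<langle>Phi X, Phi Y\<rangle>"
    by (rule ht_inner[OF Phi_rep(2)[OF assms(1)] _ Phi_rep(2)[OF assms(2)]]) simp_all
  thus ?thesis unfolding e by (rule limI)
qed

lemma G_norm: "X \<in> GC \<Longrightarrow> hs_norm G X = \<parallel>Phi X\<parallel>"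
  unfolding hs_norm_def using G_inner by simp

lemma G_normsub: "X \<in> GC \<Longrightarrow> Y \<in> GC \<Longrightarrow> hs_norm G (hs_sub G X Y) = \<parallel>Phi X \<ominus> Phi Y\<parallel>"
  using G_norm[OF G_sub(1)] G_sub(2) by simp

lemma vec_in: "gns_vec A \<omega> a \<in> GC" and Phi_vec: "Phi (gns_vec A \<omega> a) = \<psi> a"
  unfolding gns_vec_def using of_tendsto[OF ht_const[OF psi_in]] by auto

definition "Kc = {u \<in> C. \<forall>e>0. \<exists>a. \<parallel>u \<ominus> \<psi> a\<parallel> < e}"

lemma Phi_Kc: assumes "X \<in> GC" shows "Phi X \<in> Kc"
  unfolding Kc_def
proof (intro CollectI conjI allI impI)
  show u: "Phi X \<in> C" using Phi_in[OF assms] .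
  fix e :: real assume e: "e > 0"
  have "(\<lambda>n. \<parallel>\<psi> (gns_rep X n) \<ominus> Phi X\<parallel>) \<longlonglongrightarrow> 0" using Phi_rep(2)[OF assms] unfolding hs_tendsto_def by simp
  then obtain N where "\<parallel>\<psi> (gns_rep X N) \<ominus> Phi X\<parallel> < e" using e unfolding LIMSEQ_def dist_real_def
    by (metis abs_of_nonneg diff_zero norm_nonneg psi_in sub_in u order_refl)
  thus "\<exists>a. \<parallel>Phi X \<ominus> \<psi> a\<parallel> < e" using norm_sub_sym[OF u psi_in] by metis
qed

lemma Kc_Phi: assumes "u \<in> Kc" shows "\<exists>X\<in>GC. Phi X = u"
proof -
  have u: "u \<in> C" using assms Kc_def by auto
  have "\<forall>n. \<exists>a. \<parallel>u \<ominus> \<psi> a\<parallel> < 1 / (real n + 1)" using assms unfolding Kc_def by simp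
  then obtain s where s: "\<And>n. \<parallel>u \<ominus> \<psi> (s n)\<parallel> < 1 / (real n + 1)" by metis
  have "(\<lambda>n. \<parallel>\<psi> (s n) \<ominus> u\<parallel>) \<longlonglongrightarrow> 0"
    by (rule squeeze0[OF norm_nonneg[OF sub_in[OF psi_in u]] _ inv_lim]) (use s norm_sub_sym[OF u psi_in] in \<open>simp add: less_imp_le\<close>)
  hence "hs_tendsto H (\<lambda>n. \<psi> (s n)) u" unfolding hs_tendsto_def using u by simp
  thus ?thesis using of_tendsto by blast
qed

lemma Kc_sub: "Kc \<subseteq> C" unfolding Kc_def by auto


lemma scl_one: "x \<in> C \<Longrightarrow> 1 \<cdot> x = x" by (rule hs_eqI) simp_all
lemma scl_scl: "x \<in> C \<Longrightarrow> c \<cdot> (d \<cdot> x) = (c * d) \<cdot> x" by (rule hs_eqI) (simp_all add: algebra_simps)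
lemma scl_addc: "x \<in> C \<Longrightarrow> (c + d) \<cdot> x = c \<cdot> x \<oplus> d \<cdot> x" by (rule hs_eqI) (simp_all add: algebra_simps)
lemma scl_addv: "x \<in> C \<Longrightarrow> y \<in> C \<Longrightarrow> c \<cdot> (x \<oplus> y) = c \<cdot> x \<oplus> c \<cdot> y" by (rule hs_eqI) (simp_all add: algebra_simps)

lemma G_hilbert: "hilbert_space G"
proof -
  note Gs = G_add G_scl G_zero G_sub G_inner Phi_in
  have inj: "\<And>X Y. X \<in> GC \<Longrightarrow> Y \<in> GC \<Longrightarrow> Phi X = Phi Y \<Longrightarrow> X = Y" by (rule Phi_inj)
  have c1: "hs_zero G \<in> GC" by (rule G_zero)
  have c2: "\<forall>x\<in>GC. \<forall>y\<in>GC. hs_add G x y \<in> GC" using G_add by blast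
  have c3: "\<forall>c. \<forall>x\<in>GC. hs_scale G c x \<in> GC" using G_scl by blast
  have c4: "\<forall>x\<in>GC. \<forall>y\<in>GC. \<forall>w\<in>GC. hs_add G (hs_add G x y) w = hs_add G x (hs_add G y w)"
    by (intro ballI inj) (simp_all add: Gs add_assoc)
  have c5: "\<forall>x\<in>GC. \<forall>y\<in>GC. hs_add G x y = hs_add G y x"
    by (intro ballI inj) (simp_all add: Gs add_comm)
  have c6: "\<forall>x\<in>GC. hs_add G (hs_zero G) x = x"
    by (intro ballI inj) (simp_all add: Gs zero_add)
  have c7: "\<forall>x\<in>GC. \<exists>y\<in>GC. hs_add G x y = hs_zero G"
  proof
    fix x assume x: "x \<in> GC"
    have "hs_add G x (hs_scale G (-1) x) = hs_zero G"
      by (rule inj) (use x in \<open>simp_all add: Gs add_comm[of "Phi x"] neg_add\<close>)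
    thus "\<exists>y\<in>GC. hs_add G x y = hs_zero G" using G_scl x by blast
  qed
  have c8: "\<forall>x\<in>GC. hs_scale G 1 x = x"
    by (intro ballI inj) (simp_all add: Gs scl_one)
  have c9: "\<forall>c d. \<forall>x\<in>GC. hs_scale G c (hs_scale G d x) = hs_scale G (c * d) x"
    by (intro allI ballI inj) (simp_all add: Gs scl_scl scl_addc scl_addv)
  have c10: "\<forall>c d. \<forall>x\<in>GC. hs_scale G (c + d) x = hs_add G (hs_scale G c x) (hs_scale G d x)"
    by (intro allI ballI inj) (simp_all add: Gs scl_scl scl_addc scl_addv)
  have c11: "\<forall>c. \<forall>x\<in>GC. \<forall>y\<in>GC. hs_scale G c (hs_add G x y) = hs_add G (hs_scale G c x) (hs_scale G c y)"
    by (intro allI ballI inj) (simp_all add: Gs scl_scl scl_addc scl_addv)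
  have c12: "\<forall>x\<in>GC. \<forall>y\<in>GC. \<forall>w\<in>GC. hs_inner G x (hs_add G y w) = hs_inner G x y + hs_inner G x w"
    by (simp add: Gs)
  have c13: "\<forall>c. \<forall>x\<in>GC. \<forall>y\<in>GC. hs_inner G x (hs_scale G c y) = c * hs_inner G x y"
    by (simp add: Gs)
  have c14: "\<forall>x\<in>GC. \<forall>y\<in>GC. hs_inner G y x = cnj (hs_inner G x y)"
  proof (intro ballI)
    fix x y assume xy: "x \<in> GC" "y \<in> GC"
    have "hs_inner G y x = \<langle>Phi y, Phi x\<rangle>" by (rule G_inner[OF xy(2) xy(1)])
    also have "\<dots> = cnj \<langle>Phi x, Phi y\<rangle>" by (rule inner_sym[OF Phi_in[OF xy(1)] Phi_in[OF xy(2)]])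
    also have "\<dots> = cnj (hs_inner G x y)" using G_inner[OF xy] by simp
    finally show "hs_inner G y x = cnj (hs_inner G x y)" .
  qed
  have c15: "\<forall>x\<in>GC. Re (hs_inner G x x) \<ge> 0"
    using inner_pos[OF Phi_in] by (simp add: G_inner)
  have c16: "\<forall>x\<in>GC. hs_inner G x x = 0 \<longrightarrow> x = hs_zero G"
  proof (intro ballI impI)
    fix x assume x: "x \<in> GC" and e: "hs_inner G x x = 0"
    have "Phi x = z" using e x by (intro inner_eq0) (simp_all add: Gs)
    thus "x = hs_zero G" using x by (intro inj) (simp_all add: Gs)
  qed
  have c17: "\<forall>s. (\<forall>n. s n \<in> GC) \<and> hs_cauchy G s \<longrightarrow> (\<exists>l. hs_tendsto G s l)"
  proof (intro allI impI)
    fix s assume a: "(\<forall>n. s n \<in> GC) \<and> hs_cauchy G s"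
    hence sG: "\<And>n. s n \<in> GC" by simp
    have eq: "\<And>m n. hs_norm G (hs_sub G (s m) (s n)) = \<parallel>Phi (s m) \<ominus> Phi (s n)\<parallel>"
      using G_normsub sG by blast
    have "hs_cauchy H (\<lambda>n. Phi (s n))" using a unfolding hs_cauchy_def eq by blast
    then obtain l where l: "hs_tendsto H (\<lambda>n. Phi (s n)) l" using complete[of "\<lambda>n. Phi (s n)"] sG Phi_in by blast
    have lK: "l \<in> Kc" unfolding Kc_def
    proof (intro CollectI conjI allI impI)
      show lC: "l \<in> C" using ht_in[OF l] .
      fix e :: real assume e: "e > 0"
      have "\<exists>N. \<forall>n\<ge>N. \<parallel>Phi (s n) \<ominus> l\<parallel> < e/2" using l e unfolding hs_tendsto_def by (intro lim0_ev) auto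
      then obtain N where N: "\<parallel>Phi (s N) \<ominus> l\<parallel> < e/2" by blast
      have "Phi (s N) \<in> Kc" by (rule Phi_Kc[OF sG])
      hence "\<exists>a. \<parallel>Phi (s N) \<ominus> \<psi> a\<parallel> < e/2" unfolding Kc_def using half_gt_zero[OF e] by blast
      then obtain a where a: "\<parallel>Phi (s N) \<ominus> \<psi> a\<parallel> < e/2" by blast
      have "\<parallel>l \<ominus> \<psi> a\<parallel> \<le> \<parallel>l \<ominus> Phi (s N)\<parallel> + \<parallel>Phi (s N) \<ominus> \<psi> a\<parallel>" by (rule norm_sub_tri[OF lC Phi_in[OF sG] psi_in])
      thus "\<exists>a. \<parallel>l \<ominus> \<psi> a\<parallel> < e" using N a norm_sub_sym[OF lC Phi_in[OF sG[of N]]] by (intro exI[of _ a]) linarith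
    qed
    obtain Y where Y: "Y \<in> GC" "Phi Y = l" using Kc_Phi[OF lK] by blast
    have eq2: "\<And>n. hs_norm G (hs_sub G (s n) Y) = \<parallel>Phi (s n) \<ominus> l\<parallel>"
      using G_normsub sG Y by blast
    have "hs_tendsto G s Y" using Y l unfolding hs_tendsto_def eq2 by blast
    thus "\<exists>l. hs_tendsto G s l" by blast
  qed
  show ?thesis unfolding hilbert_space_def
    using c1 c2 c3 c4 c5 c6 c7 c8 c9 c10 c11 c12 c13 c14 c15 c16 c17 by blast
qed


lemma Phi_bl: "hs_bounded_linear G H Phi"
  unfolding hs_bounded_linear_def
proof (intro conjI ballI allI exI)
  fix x assume x: "x \<in> GC"
  show "Phi x \<in> C" using Phi_in[OF x] .
  show "\<parallel>Phi x\<parallel> \<le> 1 * hs_norm G x" using G_norm[OF x] by simp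
  fix c show "Phi (hs_scale G c x) = c \<cdot> Phi x" using G_scl(2)[OF x] .
next
  fix x y assume "x \<in> GC" "y \<in> GC"
  thus "Phi (hs_add G x y) = Phi x \<oplus> Phi y" using G_add(2) by blast
qed

lemma Kc_z: "z \<in> Kc" using Phi_Kc[OF G_zero(1)] G_zero(2) by simp
lemma Kc_add: assumes "u \<in> Kc" "v \<in> Kc" shows "u \<oplus> v \<in> Kc"
proof -
  obtain X Y where "X \<in> GC" "Y \<in> GC" "Phi X = u" "Phi Y = v" using Kc_Phi assms by metis
  thus ?thesis using Phi_Kc[OF G_add(1)] G_add(2) by metis
qed
lemma Kc_scl: assumes "u \<in> Kc" shows "c \<cdot> u \<in> Kc"
proof -
  obtain X where "X \<in> GC" "Phi X = u" using Kc_Phi assms by metis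
  thus ?thesis using Phi_Kc[OF G_scl(1)] G_scl(2) by metis
qed
lemma Kc_closed: assumes s: "\<And>n. s n \<in> Kc" and l: "hs_tendsto H s l" shows "l \<in> Kc"
  unfolding Kc_def
proof (intro CollectI conjI allI impI)
  show lC: "l \<in> C" using ht_in[OF l] .
  have sC: "\<And>n. s n \<in> C" using s Kc_sub by blast
  fix e :: real assume e: "e > 0"
  have "\<exists>N. \<forall>n\<ge>N. \<parallel>s n \<ominus> l\<parallel> < e/2" using l e unfolding hs_tendsto_def by (intro lim0_ev) auto
  then obtain N where N: "\<parallel>s N \<ominus> l\<parallel> < e/2" by blast
  have "\<exists>a. \<parallel>s N \<ominus> \<psi> a\<parallel> < e/2" using s[of N] unfolding Kc_def using half_gt_zero[OF e] by blast
  then obtain a where a: "\<parallel>s N \<ominus> \<psi> a\<parallel> < e/2" by blast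
  have "\<parallel>l \<ominus> \<psi> a\<parallel> \<le> \<parallel>l \<ominus> s N\<parallel> + \<parallel>s N \<ominus> \<psi> a\<parallel>" by (rule norm_sub_tri[OF lC sC psi_in])
  thus "\<exists>a. \<parallel>l \<ominus> \<psi> a\<parallel> < e" using N a norm_sub_sym[OF lC sC[of N]] by (intro exI[of _ a]) linarith
qed

definition Padj :: "'h \<Rightarrow> (nat \<Rightarrow> 'a) set" where
  "Padj y = (SOME X. X \<in> GC \<and> Phi X = (SOME k. k \<in> Kc \<and> (\<forall>w\<in>Kc. \<langle>w, y \<ominus> k\<rangle> = 0)))"

lemma Padj_prop: assumes y: "y \<in> C"
  shows "Padj y \<in> GC" "\<And>w. w \<in> Kc \<Longrightarrow> \<langle>w, y \<ominus> Phi (Padj y)\<rangle> = 0"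
proof -
  define k where "k = (SOME k. k \<in> Kc \<and> (\<forall>w\<in>Kc. \<langle>w, y \<ominus> k\<rangle> = 0))"
  have "\<exists>k\<in>Kc. \<forall>w\<in>Kc. \<langle>w, y \<ominus> k\<rangle> = 0"
    by (rule proj[OF Kc_sub Kc_z Kc_add Kc_scl Kc_closed y]) (simp_all)
  hence "\<exists>k. k \<in> Kc \<and> (\<forall>w\<in>Kc. \<langle>w, y \<ominus> k\<rangle> = 0)" by blast
  hence kk: "k \<in> Kc \<and> (\<forall>w\<in>Kc. \<langle>w, y \<ominus> k\<rangle> = 0)" unfolding k_def by (rule someI_ex)
  hence k: "k \<in> Kc" "\<And>w. w \<in> Kc \<Longrightarrow> \<langle>w, y \<ominus> k\<rangle> = 0" by auto
  have "\<exists>X. X \<in> GC \<and> Phi X = k" using Kc_Phi[OF k(1)] by blast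
  hence X: "Padj y \<in> GC \<and> Phi (Padj y) = k" unfolding Padj_def k_def[symmetric] by (rule someI_ex)
  show "Padj y \<in> GC" using X by simp
  fix w assume "w \<in> Kc" thus "\<langle>w, y \<ominus> Phi (Padj y)\<rangle> = 0" using X k by simp
qed

lemma Phi_adj: "hs_adjoint G H Phi Padj"
  unfolding hs_adjoint_def
proof (intro conjI ballI)
  fix y assume y: "y \<in> C"
  show "Padj y \<in> GC" using Padj_prop(1)[OF y] .
  fix X assume X: "X \<in> GC"
  have P: "Phi (Padj y) \<in> C" using Phi_in[OF Padj_prop(1)[OF y]] .
  have "\<langle>Phi X, y \<ominus> Phi (Padj y)\<rangle> = 0" using Padj_prop(2)[OF y Phi_Kc[OF X]] .
  hence "\<langle>Phi X, y\<rangle> = \<langle>Phi X, Phi (Padj y)\<rangle>" using Phi_in[OF X] y P by simp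
  thus "\<langle>Phi X, y\<rangle> = hs_inner G X (Padj y)" using G_inner[OF X Padj_prop(1)[OF y]] by simp
qed

lemma Padj_Phi: assumes X: "X \<in> GC" shows "Padj (Phi X) = X"
proof -
  have PX: "Phi X \<in> C" using Phi_in[OF X] .
  have Y: "Padj (Phi X) \<in> GC" using Padj_prop(1)[OF PX] .
  have wK: "Phi X \<ominus> Phi (Padj (Phi X)) \<in> Kc" using Phi_Kc[OF G_sub(1)[OF X Y]] G_sub(2)[OF X Y] by simp
  have "\<langle>Phi X \<ominus> Phi (Padj (Phi X)), Phi X \<ominus> Phi (Padj (Phi X))\<rangle> = 0" using Padj_prop(2)[OF PX wK] .
  hence "Phi X = Phi (Padj (Phi X))" using PX Phi_in[OF Y] by (intro hs_eqI) simp_all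
  thus ?thesis using Phi_inj[OF Y X] by simp
qed

lemma Phi_mor_adj: "\<exists>L'. hs_adjoint G H Phi L' \<and> (\<forall>x\<in>GC. L' (Phi x) = x)"
  using Phi_adj Padj_Phi by blast

lemma cyc_surj: assumes cyc: "\<forall>x\<in>C. \<forall>e>0. \<exists>a. \<parallel>x \<ominus> \<psi> a\<parallel> < e" and x: "x \<in> C"
  shows "\<exists>X\<in>GC. Phi X = x"
  using Kc_Phi cyc x unfolding Kc_def by blast

definition Minv :: "'h \<Rightarrow> (nat \<Rightarrow> 'a) set" where "Minv x = (SOME X. X \<in> GC \<and> Phi X = x)"

lemma Minv_prop: assumes cyc: "\<forall>x\<in>C. \<forall>e>0. \<exists>a. \<parallel>x \<ominus> \<psi> a\<parallel> < e" and x: "x \<in> C"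
  shows "Minv x \<in> GC" "Phi (Minv x) = x"
proof -
  have "\<exists>X. X \<in> GC \<and> Phi X = x" using cyc_surj[OF cyc x] by blast
  hence "Minv x \<in> GC \<and> Phi (Minv x) = x" unfolding Minv_def by (rule someI_ex)
  thus "Minv x \<in> GC" "Phi (Minv x) = x" by auto
qed

lemma Minv_Phi: "X \<in> GC \<Longrightarrow> Minv (Phi X) = X"
proof -
  assume X: "X \<in> GC"
  have "\<exists>Y. Y \<in> GC \<and> Phi Y = Phi X" using X by blast
  hence "Minv (Phi X) \<in> GC \<and> Phi (Minv (Phi X)) = Phi X" unfolding Minv_def by (rule someI_ex)
  thus ?thesis using Phi_inj X by blast
qed

lemma Minv_bl: assumes cyc: "\<forall>x\<in>C. \<forall>e>0. \<exists>a. \<parallel>x \<ominus> \<psi> a\<parallel> < e"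
  shows "hs_bounded_linear H G Minv"
  unfolding hs_bounded_linear_def
proof (intro conjI ballI allI exI)
  fix x assume x: "x \<in> C"
  note M = Minv_prop[OF cyc]
  show "Minv x \<in> GC" using M(1)[OF x] .
  show "hs_norm G (Minv x) \<le> 1 * \<parallel>x\<parallel>" using G_norm[OF M(1)[OF x]] M(2)[OF x] by simp
  fix c show "Minv (c \<cdot> x) = hs_scale G c (Minv x)"
    by (rule Phi_inj) (use x M G_scl in auto)
next
  fix x y assume xy: "x \<in> C" "y \<in> C"
  note M = Minv_prop[OF cyc]
  show "Minv (x \<oplus> y) = hs_add G (Minv x) (Minv y)"
    by (rule Phi_inj) (use xy M G_add in auto)
qed

lemma Minv_adj: assumes cyc: "\<forall>x\<in>C. \<forall>e>0. \<exists>a. \<parallel>x \<ominus> \<psi> a\<parallel> < e"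
  shows "hs_adjoint H G Minv Phi"
  unfolding hs_adjoint_def
proof (intro conjI ballI)
  note M = Minv_prop[OF cyc]
  fix X assume X: "X \<in> GC"
  show "Phi X \<in> C" using Phi_in[OF X] .
  fix x assume x: "x \<in> C"
  show "hs_inner G (Minv x) X = \<langle>x, Phi X\<rangle>" using G_inner[OF M(1)[OF x] X] M(2)[OF x] by simp
qed

end

lemma (in hs) self_add_zero: "x \<in> C \<Longrightarrow> x \<oplus> x = x \<Longrightarrow> x = z"
proof -
  assume x: "x \<in> C" and e: "x \<oplus> x = x"
  have "\<langle>x,x\<rangle> = \<langle>x \<oplus> x, x\<rangle>" using e by simp
  also have "\<dots> = \<langle>x,x\<rangle> + \<langle>x,x\<rangle>" using x by simp
  finally have "\<langle>x,x\<rangle> = 0" by simp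
  thus ?thesis using inner_eq0 x by blast
qed

locale reploc = hs H for H :: "'h hilb" +
  fixes A :: "'a cstar_alg" and \<pi> :: "'a \<Rightarrow> 'h \<Rightarrow> 'h" and \<Omega> :: 'h
  assumes isrep: "is_rep A \<pi> H" and \<Omega>C: "\<Omega> \<in> C" and \<Omega>n: "\<parallel>\<Omega>\<parallel> = 1"
    and zz: "ca_add A (ca_zero A) (ca_zero A) = ca_zero A"
begin

lemma rep_bl: "hs_bounded_linear H H (\<pi> a)" using isrep unfolding is_rep_def by blast
lemma rep_in[simp]: "x \<in> C \<Longrightarrow> \<pi> a x \<in> C" using bl_facts(1)[OF rep_bl] by blast
lemma rep_add: "x \<in> C \<Longrightarrow> \<pi> (ca_add A a b) x = \<pi> a x \<oplus> \<pi> b x" using isrep unfolding is_rep_def by blast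
lemma rep_scl: "x \<in> C \<Longrightarrow> \<pi> (ca_scale A c a) x = c \<cdot> \<pi> a x" using isrep unfolding is_rep_def by blast
lemma rep_mul: "x \<in> C \<Longrightarrow> \<pi> (ca_mul A a b) x = \<pi> a (\<pi> b x)" using isrep unfolding is_rep_def by blast
lemma rep_one: "x \<in> C \<Longrightarrow> \<pi> (ca_one A) x = x" using isrep unfolding is_rep_def by blast
lemma rep_adj: "hs_adjoint H H (\<pi> a) (\<pi> (ca_star A a))" using isrep unfolding is_rep_def by blast
lemma rep_adj': "x \<in> C \<Longrightarrow> y \<in> C \<Longrightarrow> \<langle>\<pi> a x, y\<rangle> = \<langle>x, \<pi> (ca_star A a) y\<rangle>"
  using rep_adj unfolding hs_adjoint_def by blast
lemma rep_hadd: "x \<in> C \<Longrightarrow> y \<in> C \<Longrightarrow> \<pi> a (x \<oplus> y) = \<pi> a x \<oplus> \<pi> a y" using bl_facts(2)[OF rep_bl] by blast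
lemma rep_hscl: "x \<in> C \<Longrightarrow> \<pi> a (c \<cdot> x) = c \<cdot> \<pi> a x" using bl_facts(3)[OF rep_bl] by blast

lemma psi_zero': "\<pi> (ca_zero A) \<Omega> = z"
  using self_add_zero[of "\<pi> (ca_zero A) \<Omega>"] rep_add[OF \<Omega>C, of "ca_zero A" "ca_zero A"] zz \<Omega>C by simp

lemma om': "rest \<pi> H \<Omega> (ca_mul A (ca_star A a) b) = \<langle>\<pi> a \<Omega>, \<pi> b \<Omega>\<rangle>"
  unfolding rest_def using rep_mul[OF \<Omega>C] rep_adj'[of \<Omega> "\<pi> b \<Omega>" a] \<Omega>C by simp

end

sublocale reploc \<subseteq> gnsloc H A "rest \<pi> H \<Omega>" "\<lambda>a. \<pi> a \<Omega>"
  by unfold_locales (simp_all add: \<Omega>C rep_add rep_scl psi_zero' om')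

context reploc
begin

abbreviation "\<omega> \<equiv> rest \<pi> H \<Omega>"

lemma m_eq: "m_map \<pi> H \<Omega> = Phi" by (rule ext) (simp add: m_map_def Phi_def)

lemma psi_mul: "\<pi> (ca_mul A a b) \<Omega> = \<pi> a (\<pi> b \<Omega>)" using rep_mul[OF \<Omega>C] .

lemma pi_G: assumes X: "X \<in> GC" shows "gns_pi A \<omega> a X \<in> GC" "Phi (gns_pi A \<omega> a X) = \<pi> a (Phi X)"
proof -
  have t: "hs_tendsto H (\<lambda>n. \<pi> a (\<pi> (gns_rep X n) \<Omega>)) (\<pi> a (Phi X))"
    by (rule bl_tendsto[OF hil hil rep_bl _ Phi_rep(2)[OF X]]) (simp add: \<Omega>C)
  have "hs_tendsto H (\<lambda>n. \<pi> (ca_mul A a (gns_rep X n)) \<Omega>) (\<pi> a (Phi X))" using t by (simp add: psi_mul)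
  thus "gns_pi A \<omega> a X \<in> GC" "Phi (gns_pi A \<omega> a X) = \<pi> a (Phi X)" unfolding gns_pi_def using of_tendsto by auto
qed

lemma gns_is_rep: "is_rep A (gns_pi A \<omega>) G"
  unfolding is_rep_def
proof (intro conjI allI ballI)
  show "hilbert_space G" by (rule G_hilbert)
  fix a
  show "hs_bounded_linear G G (gns_pi A \<omega> a)"
    unfolding hs_bounded_linear_def
  proof (intro conjI ballI allI)
    fix x assume x: "x \<in> GC"
    show "gns_pi A \<omega> a x \<in> GC" using pi_G(1)[OF x] .
    fix c show "gns_pi A \<omega> a (hs_scale G c x) = hs_scale G c (gns_pi A \<omega> a x)"
      by (rule Phi_inj) (simp_all add: pi_G G_scl x Phi_in rep_hscl)
  next
    fix x y assume xy: "x \<in> GC" "y \<in> GC"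
    show "gns_pi A \<omega> a (hs_add G x y) = hs_add G (gns_pi A \<omega> a x) (gns_pi A \<omega> a y)"
      by (rule Phi_inj) (simp_all add: pi_G G_add xy Phi_in rep_hadd)
  next
    obtain B where B: "\<And>x. x \<in> C \<Longrightarrow> \<parallel>\<pi> a x\<parallel> \<le> B * \<parallel>x\<parallel>" using bl_facts(4)[OF rep_bl] by blast
    show "\<exists>B. \<forall>x\<in>GC. hs_norm G (gns_pi A \<omega> a x) \<le> B * hs_norm G x"
      by (intro exI[of _ B] ballI) (simp add: G_norm pi_G B Phi_in)
  qed
  show "hs_adjoint G G (gns_pi A \<omega> a) (gns_pi A \<omega> (ca_star A a))"
    unfolding hs_adjoint_def
  proof (intro conjI ballI)
    fix y assume y: "y \<in> GC"
    show "gns_pi A \<omega> (ca_star A a) y \<in> GC" using pi_G(1)[OF y] .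
    fix x assume x: "x \<in> GC"
    show "hs_inner G (gns_pi A \<omega> a x) y = hs_inner G x (gns_pi A \<omega> (ca_star A a) y)"
      using x y by (simp add: G_inner pi_G rep_adj' Phi_in)
  qed
next
  fix a b x assume x: "x \<in> GC"
  show "gns_pi A \<omega> (ca_add A a b) x = hs_add G (gns_pi A \<omega> a x) (gns_pi A \<omega> b x)"
    by (rule Phi_inj) (simp_all add: pi_G G_add x Phi_in rep_add)
  show "gns_pi A \<omega> (ca_mul A a b) x = gns_pi A \<omega> a (gns_pi A \<omega> b x)"
    by (rule Phi_inj) (simp_all add: pi_G x Phi_in rep_mul)
next
  fix c a x assume x: "x \<in> GC"
  show "gns_pi A \<omega> (ca_scale A c a) x = hs_scale G c (gns_pi A \<omega> a x)"
    by (rule Phi_inj) (simp_all add: pi_G G_scl x Phi_in rep_scl)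
next
  fix x assume x: "x \<in> GC"
  show "gns_pi A \<omega> (ca_one A) x = x"
    by (rule Phi_inj) (simp_all add: pi_G x Phi_in rep_one)
qed

lemma Phi_one: "Phi (gns_vec A \<omega> (ca_one A)) = \<Omega>" using Phi_vec rep_one[OF \<Omega>C] by simp

lemma gns_is_prep: "is_prep A (gns_pi A \<omega>) G (gns_vec A \<omega> (ca_one A))"
  unfolding is_prep_def using gns_is_rep vec_in G_norm[OF vec_in] Phi_one \<Omega>n by simp

lemma m_tendsto: "\<forall>X\<in>GC. \<forall>x\<in>X. hs_tendsto H (\<lambda>n. \<pi> (x n) \<Omega>) (m_map \<pi> H \<Omega> X)"
proof (intro ballI)
  fix X x assume X: "X \<in> GC" and x: "x \<in> X"
  obtain y where y: "cau y" "X = cls y" using X by (rule GC_cases)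
  have "cau x" "lm x = lm y" using x y cls_mem_lm by auto
  thus "hs_tendsto H (\<lambda>n. \<pi> (x n) \<Omega>) (m_map \<pi> H \<Omega> X)" using lm_tendsto m_eq Phi_cls y by metis
qed

lemma m_vec: "m_map \<pi> H \<Omega> (gns_vec A \<omega> a) = \<pi> a \<Omega>" using m_eq Phi_vec by simp

lemma m_mor: "is_rep_mor A (gns_pi A \<omega>) G (gns_vec A \<omega> (ca_one A)) \<pi> H \<Omega> (m_map \<pi> H \<Omega>)"
  unfolding is_rep_mor_def m_eq using Phi_bl pi_G(2) Phi_one Phi_mor_adj by blast

lemma gns_cyclic: "is_cyclic (gns_pi A \<omega>) G (gns_vec A \<omega> (ca_one A))"
  unfolding is_cyclic_def
proof (intro ballI allI impI)
  fix X and e :: real assume X: "X \<in> GC" and e: "e > 0"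
  have "\<exists>a. \<parallel>Phi X \<ominus> \<pi> a \<Omega>\<parallel> < e" using Phi_Kc[OF X] e unfolding Kc_def by blast
  then obtain a where a: "\<parallel>Phi X \<ominus> \<pi> a \<Omega>\<parallel> < e" by blast
  have eq: "hs_norm G (hs_sub G X (gns_pi A \<omega> a (gns_vec A \<omega> (ca_one A)))) = \<parallel>Phi X \<ominus> \<pi> a \<Omega>\<parallel>"
    using G_normsub[OF X pi_G(1)[OF vec_in]] pi_G(2)[OF vec_in] Phi_one by simp
  show "\<exists>a. hs_norm G (hs_sub G X (gns_pi A \<omega> a (gns_vec A \<omega> (ca_one A)))) < e"
    by (rule exI[of _ a]) (simp only: eq a)
qed

lemma cyc_part: assumes cyc: "is_cyclic \<pi> H \<Omega>"
  shows "\<exists>M. is_rep_mor A \<pi> H \<Omega> (gns_pi A \<omega>) G (gns_vec A \<omega> (ca_one A)) M \<and>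
                (\<forall>X\<in>GC. M (m_map \<pi> H \<Omega> X) = X) \<and>
                (\<forall>x\<in>C. m_map \<pi> H \<Omega> (M x) = x)"
proof -
  have c: "\<forall>x\<in>C. \<forall>e>0. \<exists>a. \<parallel>x \<ominus> \<pi> a \<Omega>\<parallel> < e" using cyc unfolding is_cyclic_def .
  note M = Minv_prop[OF c]
  have "is_rep_mor A \<pi> H \<Omega> (gns_pi A \<omega>) G (gns_vec A \<omega> (ca_one A)) Minv"
    unfolding is_rep_mor_def
  proof (intro conjI allI ballI)
    show "hs_bounded_linear H G Minv" using Minv_bl[OF c] .
    fix a x assume x: "x \<in> C"
    show "Minv (\<pi> a x) = gns_pi A \<omega> a (Minv x)"
      by (rule Phi_inj) (simp_all add: M x pi_G)
  next
    show "Minv \<Omega> = gns_vec A \<omega> (ca_one A)" using Minv_Phi[OF vec_in, of "ca_one A"] unfolding Phi_one .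
  next
    show "\<exists>L'. hs_adjoint H G Minv L' \<and> (\<forall>x\<in>C. L' (Minv x) = x)"
      using Minv_adj[OF c] M by blast
  qed
  moreover have "\<forall>X\<in>GC. Minv (m_map \<pi> H \<Omega> X) = X" using Minv_Phi m_eq by simp
  moreover have "\<forall>x\<in>C. m_map \<pi> H \<Omega> (Minv x) = x" using M m_eq by simp
  ultimately show ?thesis by blast
qed

end

lemma squeeze0': "(\<And>n. 0 \<le> a n) \<Longrightarrow> (\<And>n. a n \<le> b n) \<Longrightarrow> b \<longlonglongrightarrow> 0 \<Longrightarrow> a \<longlonglongrightarrow> (0::real)"
  by (rule real_tendsto_sandwich[of "\<lambda>n. 0" a sequentially b]) auto

locale cs =
  fixes A :: "'a cstar_alg"
  assumes csa: "cstar_algebra A"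
begin

lemmas cax = csa[unfolded cstar_algebra_def]
lemmas c1 = cax[THEN conjunct1]
lemmas c2 = cax[THEN conjunct2, THEN conjunct1]
lemmas c3 = cax[THEN conjunct2, THEN conjunct2, THEN conjunct1]
lemmas c4 = cax[THEN conjunct2, THEN conjunct2, THEN conjunct2, THEN conjunct1]
lemmas c5 = cax[THEN conjunct2, THEN conjunct2, THEN conjunct2, THEN conjunct2, THEN conjunct1]
lemmas c6 = cax[THEN conjunct2, THEN conjunct2, THEN conjunct2, THEN conjunct2, THEN conjunct2, THEN conjunct1]
lemmas c7 = cax[THEN conjunct2, THEN conjunct2, THEN conjunct2, THEN conjunct2, THEN conjunct2, THEN conjunct2, THEN conjunct1]
lemmas c8 = cax[THEN conjunct2, THEN conjunct2, THEN conjunct2, THEN conjunct2, THEN conjunct2, THEN conjunct2, THEN conjunct2, THEN conjunct1]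
lemmas c9 = cax[THEN conjunct2, THEN conjunct2, THEN conjunct2, THEN conjunct2, THEN conjunct2, THEN conjunct2, THEN conjunct2, THEN conjunct2, THEN conjunct1]
lemmas c10 = cax[THEN conjunct2, THEN conjunct2, THEN conjunct2, THEN conjunct2, THEN conjunct2, THEN conjunct2, THEN conjunct2, THEN conjunct2, THEN conjunct2, THEN conjunct1]
lemmas c11 = cax[THEN conjunct2, THEN conjunct2, THEN conjunct2, THEN conjunct2, THEN conjunct2, THEN conjunct2, THEN conjunct2, THEN conjunct2, THEN conjunct2, THEN conjunct2, THEN conjunct1]
lemmas c12 = cax[THEN conjunct2, THEN conjunct2, THEN conjunct2, THEN conjunct2, THEN conjunct2, THEN conjunct2, THEN conjunct2, THEN conjunct2, THEN conjunct2, THEN conjunct2, THEN conjunct2, THEN conjunct1]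
lemmas c13 = cax[THEN conjunct2, THEN conjunct2, THEN conjunct2, THEN conjunct2, THEN conjunct2, THEN conjunct2, THEN conjunct2, THEN conjunct2, THEN conjunct2, THEN conjunct2, THEN conjunct2, THEN conjunct2, THEN conjunct1]
lemmas c14 = cax[THEN conjunct2, THEN conjunct2, THEN conjunct2, THEN conjunct2, THEN conjunct2, THEN conjunct2, THEN conjunct2, THEN conjunct2, THEN conjunct2, THEN conjunct2, THEN conjunct2, THEN conjunct2, THEN conjunct2, THEN conjunct1]
lemmas c15 = cax[THEN conjunct2, THEN conjunct2, THEN conjunct2, THEN conjunct2, THEN conjunct2, THEN conjunct2, THEN conjunct2, THEN conjunct2, THEN conjunct2, THEN conjunct2, THEN conjunct2, THEN conjunct2, THEN conjunct2, THEN conjunct2, THEN conjunct1]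
lemmas c16 = cax[THEN conjunct2, THEN conjunct2, THEN conjunct2, THEN conjunct2, THEN conjunct2, THEN conjunct2, THEN conjunct2, THEN conjunct2, THEN conjunct2, THEN conjunct2, THEN conjunct2, THEN conjunct2, THEN conjunct2, THEN conjunct2, THEN conjunct2, THEN conjunct1]
lemmas c17 = cax[THEN conjunct2, THEN conjunct2, THEN conjunct2, THEN conjunct2, THEN conjunct2, THEN conjunct2, THEN conjunct2, THEN conjunct2, THEN conjunct2, THEN conjunct2, THEN conjunct2, THEN conjunct2, THEN conjunct2, THEN conjunct2, THEN conjunct2, THEN conjunct2, THEN conjunct1]
lemmas c18 = cax[THEN conjunct2, THEN conjunct2, THEN conjunct2, THEN conjunct2, THEN conjunct2, THEN conjunct2, THEN conjunct2, THEN conjunct2, THEN conjunct2, THEN conjunct2, THEN conjunct2, THEN conjunct2, THEN conjunct2, THEN conjunct2, THEN conjunct2, THEN conjunct2, THEN conjunct2, THEN conjunct1]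
lemmas c19 = cax[THEN conjunct2, THEN conjunct2, THEN conjunct2, THEN conjunct2, THEN conjunct2, THEN conjunct2, THEN conjunct2, THEN conjunct2, THEN conjunct2, THEN conjunct2, THEN conjunct2, THEN conjunct2, THEN conjunct2, THEN conjunct2, THEN conjunct2, THEN conjunct2, THEN conjunct2, THEN conjunct2, THEN conjunct1]
lemmas c20 = cax[THEN conjunct2, THEN conjunct2, THEN conjunct2, THEN conjunct2, THEN conjunct2, THEN conjunct2, THEN conjunct2, THEN conjunct2, THEN conjunct2, THEN conjunct2, THEN conjunct2, THEN conjunct2, THEN conjunct2, THEN conjunct2, THEN conjunct2, THEN conjunct2, THEN conjunct2, THEN conjunct2, THEN conjunct2, THEN conjunct1]
lemmas c21 = cax[THEN conjunct2, THEN conjunct2, THEN conjunct2, THEN conjunct2, THEN conjunct2, THEN conjunct2, THEN conjunct2, THEN conjunct2, THEN conjunct2, THEN conjunct2, THEN conjunct2, THEN conjunct2, THEN conjunct2, THEN conjunct2, THEN conjunct2, THEN conjunct2, THEN conjunct2, THEN conjunct2, THEN conjunct2, THEN conjunct2, THEN conjunct1]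
lemmas c22 = cax[THEN conjunct2, THEN conjunct2, THEN conjunct2, THEN conjunct2, THEN conjunct2, THEN conjunct2, THEN conjunct2, THEN conjunct2, THEN conjunct2, THEN conjunct2, THEN conjunct2, THEN conjunct2, THEN conjunct2, THEN conjunct2, THEN conjunct2, THEN conjunct2, THEN conjunct2, THEN conjunct2, THEN conjunct2, THEN conjunct2, THEN conjunct2, THEN conjunct1]
lemmas c23 = cax[THEN conjunct2, THEN conjunct2, THEN conjunct2, THEN conjunct2, THEN conjunct2, THEN conjunct2, THEN conjunct2, THEN conjunct2, THEN conjunct2, THEN conjunct2, THEN conjunct2, THEN conjunct2, THEN conjunct2, THEN conjunct2, THEN conjunct2, THEN conjunct2, THEN conjunct2, THEN conjunct2, THEN conjunct2, THEN conjunct2, THEN conjunct2, THEN conjunct2]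

abbreviation ad (infixl "+." 65) where "a +. b \<equiv> ca_add A a b"
abbreviation sc (infixr "*:" 75) where "c *: a \<equiv> ca_scale A c a"
abbreviation mu (infixl "**" 70) where "a ** b \<equiv> ca_mul A a b"
abbreviation "zr \<equiv> ca_zero A"
abbreviation "on \<equiv> ca_one A"
abbreviation "st \<equiv> ca_star A"
abbreviation "nm \<equiv> ca_norm A"
abbreviation sb (infixl "-." 65) where "a -. b \<equiv> ca_sub A a b"

lemma ad_assoc: "(a +. b) +. c = a +. (b +. c)" using c1 by blast
lemma ad_comm: "a +. b = b +. a" using c2 by blast
lemma zr_ad: "zr +. a = a" using c3 by blast
lemma ad_zr: "a +. zr = a" using zr_ad ad_comm by metis
lemma inv_ex: "\<exists>b. a +. b = zr" using c4 by blast
lemma sc_one: "1 *: a = a" using c5 by blast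
lemma sc_sc: "c *: (d *: a) = (c * d) *: a" using c6 by blast
lemma sc_addc: "(c + d) *: a = c *: a +. d *: a" using c7 by blast
lemma sc_ad: "c *: (a +. b) = c *: a +. c *: b" using c8 by blast
lemma mu_assoc: "(a ** b) ** c = a ** (b ** c)" using c9 by blast
lemma mu_one: "on ** a = a" "a ** on = a" using c10 by blast+
lemma mu_ad: "a ** (b +. c) = a ** b +. a ** c" using c11 by blast
lemma ad_mu: "(a +. b) ** c = a ** c +. b ** c" using c12 by blast
lemma sc_mu: "(c *: a) ** b = c *: (a ** b)" "a ** (c *: b) = c *: (a ** b)" using c13 by blast+
lemma st_st: "st (st a) = a" using c14 by blast
lemma st_ad: "st (a +. b) = st a +. st b" using c15 by blast
lemma st_sc: "st (c *: a) = cnj c *: st a" using c16 by blast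
lemma st_mu: "st (a ** b) = st b ** st a" using c17 by blast
lemma nm_eq0: "nm a = 0 \<longleftrightarrow> a = zr" using c18 by blast
lemma nm_sc: "nm (c *: a) = cmod c * nm a" using c19 by blast
lemma nm_ad: "nm (a +. b) \<le> nm a + nm b" using c20 by blast
lemma nm_mu: "nm (a ** b) \<le> nm a * nm b" using c21 by blast
lemma complete: "(\<forall>e>0. \<exists>N. \<forall>m\<ge>N. \<forall>n\<ge>N. nm (s m -. s n) < e) \<Longrightarrow> \<exists>l. (\<lambda>n. nm (s n -. l)) \<longlonglongrightarrow> 0"
  using c22 by blast
lemma cstar: "nm (st a ** a) = (nm a)^2" using c23 by blast


lemma sc0: "0 *: a = zr"
proof -
  define s where "s = 0 *: a"
  have ss: "s = s +. s" unfolding s_def using sc_addc[of 0 0 a] by simp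
  obtain b where b: "s +. b = zr" using inv_ex by blast
  have "zr = (s +. s) +. b" using b ss by simp
  also have "\<dots> = s" using b by (simp add: ad_assoc ad_zr)
  finally show ?thesis unfolding s_def by simp
qed

lemma sc_zr: "c *: zr = zr" using sc0[of zr] sc_sc[of c 0 zr] by simp

lemma ad_neg: "a +. (-1) *: a = zr"
  using sc_addc[of 1 "-1" a] sc_one sc0 by simp
lemma ad_neg': "(-1) *: a +. a = zr" using ad_neg ad_comm by metis

lemma sb_def: "a -. b = a +. (-1) *: b" unfolding ca_sub_def ..
lemma sb_self: "a -. a = zr" unfolding sb_def by (rule ad_neg)
lemma sb_zr: "a -. zr = a" unfolding sb_def sc_zr ad_zr ..

lemma nm_zr[simp]: "nm zr = 0" using nm_eq0 by simp
lemma nm_nonneg[simp]: "0 \<le> nm a"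
proof -
  have "0 = nm (a +. (-1) *: a)" using ad_neg by simp
  also have "\<dots> \<le> nm a + nm ((-1) *: a)" by (rule nm_ad)
  also have "\<dots> = 2 * nm a" using nm_sc[of "-1" a] by simp
  finally show ?thesis by simp
qed

lemma sb_eq: "a -. b = zr \<Longrightarrow> a = b"
proof -
  assume e: "a -. b = zr"
  have "b = zr +. b" by (simp add: zr_ad)
  also have "\<dots> = (a +. (-1) *: b) +. b" using e unfolding sb_def by simp
  also have "\<dots> = a" by (simp add: ad_assoc ad_neg' ad_zr)
  finally show ?thesis by simp
qed

lemma nm_sb_eq: "nm (a -. b) = 0 \<Longrightarrow> a = b" using nm_eq0 sb_eq by blast

lemma sb_tri_eq: "a -. c = (a -. b) +. (b -. c)"
proof -
  have "(a -. b) +. (b -. c) = a +. (((-1) *: b +. b) +. (-1) *: c)" unfolding sb_def by (simp add: ad_assoc)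
  also have "\<dots> = a -. c" unfolding ad_neg' zr_ad sb_def ..
  finally show ?thesis by simp
qed

lemma nm_sb_tri: "nm (a -. c) \<le> nm (a -. b) + nm (b -. c)"
  using sb_tri_eq[of a c b] nm_ad by metis

lemma sb_sym_eq: "b -. a = (-1) *: (a -. b)"
  unfolding sb_def sc_ad sc_sc using ad_comm[of b "(-1) *: a"] by (simp add: sc_one)

lemma nm_sb_sym: "nm (b -. a) = nm (a -. b)" unfolding sb_sym_eq[of b a] nm_sc by simp

lemma nm_le_sb: "nm a \<le> nm (a -. b) + nm b"
proof -
  have "(a -. b) +. b = a" unfolding sb_def by (simp add: ad_assoc ad_neg' ad_zr)
  thus ?thesis using nm_ad[of "a -. b" b] by simp
qed

lemma ad4: "(a +. b) +. (c +. d) = (a +. c) +. (b +. d)"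
proof -
  have "(a +. b) +. (c +. d) = a +. ((b +. c) +. d)" by (simp add: ad_assoc)
  also have "\<dots> = a +. ((c +. b) +. d)" by (simp add: ad_comm)
  also have "\<dots> = (a +. c) +. (b +. d)" by (simp add: ad_assoc)
  finally show ?thesis .
qed

lemma F_sb: "(1/2) *: (h +. p) -. (1/2) *: (h +. q) = (1/2) *: (p -. q)"
proof -
  have "(1/2) *: (h +. p) -. (1/2) *: (h +. q) = ((1/2) *: h +. (-1/2) *: h) +. ((1/2) *: p +. (-1/2) *: q)"
    unfolding sb_def sc_ad sc_sc by (simp add: ad4)
  also have "(1/2) *: h +. (-1/2) *: h = zr" using sc_addc[of "1/2" "-1/2" h] sc0 by simp
  finally show ?thesis unfolding sb_def sc_ad sc_sc by (simp add: zr_ad)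
qed

lemma sq_sb: "p ** p -. q ** q = p ** (p -. q) +. (p -. q) ** q"
proof -
  have "p ** (p -. q) +. (p -. q) ** q = (p ** p +. (-1) *: (p ** q)) +. (p ** q +. (-1) *: (q ** q))"
    unfolding sb_def mu_ad ad_mu sc_mu ..
  also have "\<dots> = p ** p +. (((-1) *: (p ** q) +. p ** q) +. (-1) *: (q ** q))" by (simp add: ad_assoc)
  also have "\<dots> = p ** p -. q ** q" unfolding ad_neg' zr_ad sb_def ..
  finally show ?thesis by simp
qed

lemma st_sb: "st (a -. b) = st a -. st b" unfolding sb_def st_ad st_sc by simp

lemma st_zr: "st zr = zr" using st_sc[of 0 zr] sc0 by simp

lemma nm_st_le: "nm a \<le> nm (st a)"
proof (cases "nm a = 0")
  case True thus ?thesis by simp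
next
  case False
  hence p: "nm a > 0" using nm_nonneg[of a] by linarith
  have "(nm a)^2 \<le> nm (st a) * nm a" using cstar[of a] nm_mu[of "st a" a] by simp
  thus ?thesis using p by (simp add: power2_eq_square)
qed

lemma nm_st: "nm (st a) = nm a"
  using nm_st_le[of a] nm_st_le[of "st a"] st_st by (simp add: antisym)


lemma lim0_ev': assumes "f \<longlonglongrightarrow> (0::real)" "e > 0" shows "\<exists>N. \<forall>n\<ge>N. f n < e"
proof -
  obtain N where "\<forall>n\<ge>N. norm (f n - 0) < e" using assms LIMSEQ_iff by metis
  thus ?thesis by (metis abs_less_iff diff_zero real_norm_def)
qed

lemma sqrt_ex:
  assumes hs: "st h = h" and hn: "nm h \<le> 1/2"
  shows "\<exists>y. st y = y \<and> y = (1/2) *: (h +. y ** y)"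
proof -
  define F where "F u = (1/2) *: (h +. u ** u)" for u
  define ys where "ys n = (F ^^ n) zr" for n
  have ys0: "ys 0 = zr" and ysS: "\<And>n. ys (Suc n) = F (ys n)" unfolding ys_def by simp_all
  have nmF: "\<And>u. nm u \<le> 1/2 \<Longrightarrow> nm (F u) \<le> 1/2"
  proof -
    fix u assume u: "nm u \<le> 1/2"
    have "nm (u ** u) \<le> nm u * nm u" by (rule nm_mu)
    also have "\<dots> \<le> (1/2) * (1/2)" using u by (intro mult_mono) auto
    finally have "nm (h +. u ** u) \<le> 1/2 + 1/4" using nm_ad[of h "u ** u"] hn by linarith
    thus "nm (F u) \<le> 1/2" unfolding F_def nm_sc by simp
  qed
  have Fc: "\<And>p q. nm p \<le> 1/2 \<Longrightarrow> nm q \<le> 1/2 \<Longrightarrow> nm (F p -. F q) \<le> (1/2) * nm (p -. q)"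
  proof -
    fix p q assume p: "nm p \<le> 1/2" and q: "nm q \<le> 1/2"
    have "nm (F p -. F q) = (1/2) * nm (p ** p -. q ** q)" unfolding F_def F_sb nm_sc by simp
    also have "nm (p ** p -. q ** q) \<le> nm p * nm (p -. q) + nm (p -. q) * nm q"
      unfolding sq_sb using nm_ad nm_mu by (meson add_mono order_trans)
    also have "\<dots> = (nm p + nm q) * nm (p -. q)" by (simp add: algebra_simps)
    also have "\<dots> \<le> 1 * nm (p -. q)" using p q by (intro mult_right_mono) auto
    finally show "nm (F p -. F q) \<le> (1/2) * nm (p -. q)" by simp
  qed
  have ysb: "\<And>n. nm (ys n) \<le> 1/2"
  proof -
    fix n show "nm (ys n) \<le> 1/2"
    proof (induction n)
      case 0 thus ?case by (simp add: ys0)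
    next
      case (Suc n) thus ?case unfolding ysS by (rule nmF)
    qed
  qed
  have dn: "\<And>n. nm (ys (Suc n) -. ys n) \<le> (1/2)^n"
  proof -
    fix n show "nm (ys (Suc n) -. ys n) \<le> (1/2)^n"
    proof (induction n)
      case 0
      have "nm (ys 1 -. ys 0) = nm (F zr)" by (simp add: ys0 ysS sb_zr)
      also have "\<dots> \<le> 1/2" by (rule nmF) simp
      finally show ?case by simp
    next
      case (Suc n)
      have "nm (ys (Suc (Suc n)) -. ys (Suc n)) \<le> (1/2) * nm (ys (Suc n) -. ys n)"
        unfolding ysS[of "Suc n"] ysS[of n] by (rule Fc[OF ysb[of "Suc n", unfolded ysS] ysb])
      thus ?case using Suc by simp
    qed
  qed
  have ck: "\<And>n k. nm (ys (n + k) -. ys n) \<le> 2 * (1/2)^n - 2 * (1/2)^(n+k)"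
  proof -
    fix n k show "nm (ys (n + k) -. ys n) \<le> 2 * (1/2)^n - 2 * (1/2)^(n+k)"
    proof (induction k)
      case 0 thus ?case by (simp add: sb_self)
    next
      case (Suc k)
      have "nm (ys (n + Suc k) -. ys n) \<le> nm (ys (Suc (n + k)) -. ys (n + k)) + nm (ys (n + k) -. ys n)"
        using nm_sb_tri by simp
      also have "\<dots> \<le> (1/2)^(n+k) + (2 * (1/2)^n - 2 * (1/2)^(n+k))" using dn[of "n+k"] Suc by linarith
      also have "\<dots> = 2 * (1/2)^n - 2 * (1/2)^(n + Suc k)" by simp
      finally show ?case .
    qed
  qed
  have cmn: "\<And>m n N. m \<ge> N \<Longrightarrow> n \<ge> N \<Longrightarrow> nm (ys m -. ys n) \<le> 2 * (1/2)^N"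
  proof -
    fix m n N :: nat assume mN: "m \<ge> N" and nN: "n \<ge> N"
    have gen: "\<And>m n. m \<ge> n \<Longrightarrow> n \<ge> N \<Longrightarrow> nm (ys m -. ys n) \<le> 2 * (1/2)^N"
    proof -
      fix m n :: nat assume mn: "m \<ge> n" and nN: "n \<ge> N"
      obtain k where k: "m = n + k" using mn le_Suc_ex by blast
      have "nm (ys m -. ys n) \<le> 2 * (1/2)^n - 2 * (1/2)^(n+k)" using ck k by simp
      also have "\<dots> \<le> 2 * (1/2)^n" by simp
      also have "\<dots> \<le> 2 * (1/2)^N" using nN by (simp add: power_decreasing)
      finally show "nm (ys m -. ys n) \<le> 2 * (1/2)^N" .
    qed
    show "nm (ys m -. ys n) \<le> 2 * (1/2)^N"
    proof (cases "m \<ge> n")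
      case True thus ?thesis using gen nN by blast
    next
      case False hence "m \<le> n" by simp
      thus ?thesis using gen[where m=n and n=m] mN nm_sb_sym[of "ys m" "ys n"] by simp
    qed
  qed
  have "\<forall>e>0. \<exists>N. \<forall>m\<ge>N. \<forall>n\<ge>N. nm (ys m -. ys n) < e"
  proof (intro allI impI)
    fix e :: real assume e: "e > 0"
    have "(\<lambda>n. (1/2::real)^n) \<longlonglongrightarrow> 0" by (rule LIMSEQ_realpow_zero) simp_all
    then obtain N where N: "(1/2::real)^N < e/2" using lim0_ev'[of "\<lambda>n. (1/2::real)^n" "e/2"] e by auto
    show "\<exists>N. \<forall>m\<ge>N. \<forall>n\<ge>N. nm (ys m -. ys n) < e"
    proof (intro exI[of _ N] allI impI)
      fix m n assume "m \<ge> N" "n \<ge> N"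
      hence "nm (ys m -. ys n) \<le> 2 * (1/2)^N" by (rule cmn)
      thus "nm (ys m -. ys n) < e" using N by linarith
    qed
  qed
  then obtain y where yl: "(\<lambda>n. nm (ys n -. y)) \<longlonglongrightarrow> 0" using complete by blast
  have yb: "nm y \<le> 1/2"
  proof -
    have "\<And>n. nm y \<le> 1/2 + nm (ys n -. y)" using nm_le_sb[of y] ysb nm_sb_sym by (smt (verit))
    moreover have "(\<lambda>n. 1/2 + nm (ys n -. y)) \<longlonglongrightarrow> 1/2 + 0" by (intro tendsto_intros yl)
    ultimately show ?thesis using LIMSEQ_le_const[of "\<lambda>n. 1/2 + nm (ys n -. y)" "1/2 + 0" "nm y"] by simp
  qed
  have fix0: "nm (y -. F y) = 0"
  proof -
    have bd: "\<And>n. nm (y -. F y) \<le> nm (ys (Suc n) -. y) + (1/2) * nm (ys n -. y)"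
    proof -
      fix n
      have "nm (y -. F y) \<le> nm (y -. ys (Suc n)) + nm (ys (Suc n) -. F y)" by (rule nm_sb_tri)
      moreover have "nm (ys (Suc n) -. F y) \<le> (1/2) * nm (ys n -. y)" unfolding ysS using Fc[OF ysb yb] .
      ultimately show "?thesis n" using nm_sb_sym[of y "ys (Suc n)"] by linarith
    qed
    have "(\<lambda>n. nm (ys (Suc n) -. y) + (1/2) * nm (ys n -. y)) \<longlonglongrightarrow> 0 + (1/2) * 0"
      by (intro tendsto_intros yl[THEN LIMSEQ_Suc] yl)
    hence lim: "(\<lambda>n. nm (ys (Suc n) -. y) + (1/2) * nm (ys n -. y)) \<longlonglongrightarrow> 0" by simp
    have "nm (y -. F y) \<le> 0" by (rule LIMSEQ_le_const[OF lim]) (use bd in blast)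
    thus ?thesis using nm_nonneg[of "y -. F y"] by linarith
  qed
  have sa: "\<And>n. st (ys n) = ys n"
  proof -
    fix n show "st (ys n) = ys n"
      by (induction n) (simp_all add: ys0 ysS st_zr F_def st_sc st_ad st_mu hs)
  qed
  have sy: "nm (st y -. y) = 0"
  proof -
    have bd: "\<And>n. nm (st y -. y) \<le> 2 * nm (ys n -. y)"
    proof -
      fix n
      have "nm (st y -. y) \<le> nm (st y -. st (ys n)) + nm (st (ys n) -. y)" by (rule nm_sb_tri)
      also have "nm (st y -. st (ys n)) = nm (ys n -. y)" unfolding st_sb[symmetric] nm_st using nm_sb_sym by simp
      finally show "nm (st y -. y) \<le> 2 * nm (ys n -. y)" using sa[of n] by simp
    qed
    have "(\<lambda>n. 2 * nm (ys n -. y)) \<longlonglongrightarrow> 2 * 0" by (intro tendsto_intros yl)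
    hence lim: "(\<lambda>n. 2 * nm (ys n -. y)) \<longlonglongrightarrow> 0" by simp
    have "nm (st y -. y) \<le> 0" by (rule LIMSEQ_le_const[OF lim]) (use bd in blast)
    thus ?thesis using nm_nonneg[of "st y -. y"] by linarith
  qed
  show ?thesis using nm_sb_eq[OF fix0] nm_sb_eq[OF sy] unfolding F_def by blast
qed

end

context reploc
begin

lemma om_lin_add: "\<omega> (ca_add A a b) = \<omega> a + \<omega> b" unfolding rest_def using \<Omega>C by (simp add: rep_add)
lemma om_lin_scl: "\<omega> (ca_scale A c a) = c * \<omega> a" unfolding rest_def using \<Omega>C by (simp add: rep_scl)
lemma om_psi: "\<omega> a = \<langle>\<Omega>, \<pi> a \<Omega>\<rangle>" unfolding rest_def ..
lemma OO: "\<langle>\<Omega>, \<Omega>\<rangle> = 1"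
proof -
  have "Re \<langle>\<Omega>, \<Omega>\<rangle> = 1" using norm_sq[OF \<Omega>C] \<Omega>n by simp
  thus ?thesis using inner_self_real[OF \<Omega>C] by simp
qed

lemma psi_bound: assumes csA: "cstar_algebra A" shows "\<parallel>\<pi> a \<Omega>\<parallel>^2 \<le> 2 * (ca_norm A a)^2"
proof -
  interpret c: cs A by (rule cs.intro[OF csA])
  show ?thesis
  proof (cases "ca_norm A a = 0")
    case True
    hence "a = ca_zero A" using c.nm_eq0 by simp
    thus ?thesis using psi_zero' by simp
  next
    case False
    define t where "t = (ca_norm A a)^2"
    have t0: "t > 0" unfolding t_def using False c.nm_nonneg[of a] by simp
    define x where "x = ca_mul A (ca_star A a) a"
    have nx: "ca_norm A x = t" unfolding x_def t_def by (rule c.cstar)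
    have sx: "ca_star A x = x" unfolding x_def c.st_mu c.st_st ..
    define h where "h = ca_scale A (complex_of_real (1 / (2 * t))) x"
    have sh: "ca_star A h = h" unfolding h_def c.st_sc sx by simp
    have cm: "cmod (complex_of_real (1 / (2 * t))) = 1 / (2 * t)" using t0 by (subst norm_of_real) simp
    have nh: "ca_norm A h \<le> 1/2" unfolding h_def c.nm_sc nx cm using t0 by simp
    obtain y where sy: "ca_star A y = y" and yF: "y = ca_scale A (1/2) (ca_add A h (ca_mul A y y))"
      using c.sqrt_ex[OF sh nh] by blast
    define b where "b = ca_sub A (ca_one A) y"
    have pb: "\<pi> b \<Omega> = \<Omega> \<ominus> \<pi> y \<Omega>" unfolding b_def psi_sub rep_one[OF \<Omega>C] ..
    have yC: "\<pi> y \<Omega> \<in> C" using \<Omega>C by simp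
    have e1: "\<langle>\<Omega>, \<pi> y \<Omega>\<rangle> = \<omega> y" using om_psi by simp
    have e2: "\<langle>\<pi> y \<Omega>, \<Omega>\<rangle> = \<omega> y"
    proof -
      have "\<langle>\<pi> y \<Omega>, \<Omega>\<rangle> = \<langle>\<pi> y \<Omega>, \<pi> (ca_one A) \<Omega>\<rangle>" using rep_one[OF \<Omega>C] by simp
      also have "\<dots> = \<omega> (ca_mul A (ca_star A y) (ca_one A))" using om' by simp
      also have "\<dots> = \<omega> y" unfolding sy c.mu_one ..
      finally show ?thesis .
    qed
    have e3: "\<langle>\<pi> y \<Omega>, \<pi> y \<Omega>\<rangle> = \<omega> (ca_mul A y y)" using om'[of y y] sy by simp
    have e4: "\<omega> y = (1/2) * (\<omega> h + \<omega> (ca_mul A y y))"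
      by (subst yF) (simp add: om_lin_add om_lin_scl)
    have "\<langle>\<pi> b \<Omega>, \<pi> b \<Omega>\<rangle> = \<langle>\<Omega>,\<Omega>\<rangle> - \<langle>\<Omega>, \<pi> y \<Omega>\<rangle> - \<langle>\<pi> y \<Omega>, \<Omega>\<rangle> + \<langle>\<pi> y \<Omega>, \<pi> y \<Omega>\<rangle>"
      unfolding pb using \<Omega>C yC by simp
    also have "\<dots> = 1 - \<omega> h" unfolding OO e1 e2 e3 e4 by (simp add: algebra_simps)
    finally have "Re (1 - \<omega> h) \<ge> 0" using inner_pos[of "\<pi> b \<Omega>"] \<Omega>C by simp
    moreover have "\<omega> h = complex_of_real (1 / (2 * t)) * \<langle>\<pi> a \<Omega>, \<pi> a \<Omega>\<rangle>"
      unfolding h_def om_lin_scl x_def om' ..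
    moreover have "Re \<langle>\<pi> a \<Omega>, \<pi> a \<Omega>\<rangle> = \<parallel>\<pi> a \<Omega>\<parallel>^2" using norm_sq[of "\<pi> a \<Omega>"] \<Omega>C by simp
    ultimately have "(1 / (2 * t)) * \<parallel>\<pi> a \<Omega>\<parallel>^2 \<le> 1" by simp
    thus ?thesis using t0 unfolding t_def[symmetric] by (simp add: field_simps)
  qed
qed

lemma state: assumes csA: "cstar_algebra A" shows "is_state A \<omega>"
  unfolding is_state_def
proof (intro conjI allI)
  fix a b show "\<omega> (ca_add A a b) = \<omega> a + \<omega> b" by (rule om_lin_add)
next
  fix c a show "\<omega> (ca_scale A c a) = c * \<omega> a" by (rule om_lin_scl)
next
  show "\<omega> (ca_one A) = 1" unfolding om_psi rep_one[OF \<Omega>C] OO ..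
next
  fix a
  have "\<omega> (ca_mul A (ca_star A a) a) = \<langle>\<pi> a \<Omega>, \<pi> a \<Omega>\<rangle>" by (rule om')
  also have "\<dots> = complex_of_real (Re \<langle>\<pi> a \<Omega>, \<pi> a \<Omega>\<rangle>)" using inner_self_real \<Omega>C by simp
  finally have e: "\<omega> (ca_mul A (ca_star A a) a) = complex_of_real (Re \<langle>\<pi> a \<Omega>, \<pi> a \<Omega>\<rangle>)" .
  show "Im (\<omega> (ca_mul A (ca_star A a) a)) = 0" unfolding e by simp
  show "Re (\<omega> (ca_mul A (ca_star A a) a)) \<ge> 0" unfolding e using inner_pos \<Omega>C by simp
next
  show "\<exists>C. \<forall>a. cmod (\<omega> a) \<le> C * ca_norm A a"
  proof (intro exI[of _ 2] allI)
    fix a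
    interpret c: cs A by (rule cs.intro[OF csA])
    have "cmod (\<omega> a) \<le> \<parallel>\<pi> a \<Omega>\<parallel> * \<parallel>\<Omega>\<parallel>" unfolding om_psi using CS[of "\<pi> a \<Omega>" \<Omega>] \<Omega>C by simp
    also have "\<dots> = \<parallel>\<pi> a \<Omega>\<parallel>" using \<Omega>n by simp
    also have "\<dots> \<le> 2 * ca_norm A a"
    proof -
      have "\<parallel>\<pi> a \<Omega>\<parallel>^2 \<le> 2 * (ca_norm A a)^2" by (rule psi_bound[OF csA])
      also have "\<dots> \<le> (2 * ca_norm A a)^2" by (simp add: power2_eq_square)
      finally show ?thesis by (rule power2_le_imp_le) (simp add: c.nm_nonneg)
    qed
    finally show "cmod (\<omega> a) \<le> 2 * ca_norm A a" .
  qed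
qed

end

lemma mk_reploc: assumes "cstar_algebra A" "is_prep A \<pi> H \<Omega>" shows "reploc H A \<pi> \<Omega>"
proof -
  interpret c: cs A by (rule cs.intro[OF assms(1)])
  have hil: "hilbert_space H" using assms(2) unfolding is_prep_def is_rep_def by blast
  show ?thesis
    by (rule reploc.intro[OF hs.intro[OF hil]], unfold_locales)
       (use assms(2) in \<open>simp_all add: is_prep_def c.zr_ad\<close>)
qed

lemma part2:
  assumes csA: "cstar_algebra A" and p: "is_prep A \<pi> H \<Omega>" and p': "is_prep A \<pi>' H' \<Omega>'"
    and L: "is_rep_mor A \<pi> H \<Omega> \<pi>' H' \<Omega>' L"
  shows "rest \<pi> H \<Omega> = rest \<pi>' H' \<Omega>' \<and>
        (\<forall>X\<in>hs_carrier (gns_space A (rest \<pi> H \<Omega>)). L (m_map \<pi> H \<Omega> X) = m_map \<pi>' H' \<Omega>' X)"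
proof -
  interpret r: reploc H A \<pi> \<Omega> by (rule mk_reploc[OF csA p])
  interpret r': reploc H' A \<pi>' \<Omega>' by (rule mk_reploc[OF csA p'])
  have Lbl: "hs_bounded_linear H H' L" and Lint: "\<And>a x. x \<in> hs_carrier H \<Longrightarrow> L (\<pi> a x) = \<pi>' a (L x)"
    and LO: "L \<Omega> = \<Omega>'" using L unfolding is_rep_mor_def by blast+
  obtain L' where adj: "hs_adjoint H H' L L'" and LL: "\<And>x. x \<in> hs_carrier H \<Longrightarrow> L' (L x) = x"
    using L unfolding is_rep_mor_def by blast
  have req: "rest \<pi> H \<Omega> = rest \<pi>' H' \<Omega>'"
  proof
    fix a
    have "rest \<pi>' H' \<Omega>' a = hs_inner H' (L \<Omega>) (L (\<pi> a \<Omega>))" unfolding rest_def LO[symmetric] using Lint r.\<Omega>C by simp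
    also have "\<dots> = hs_inner H \<Omega> (L' (L (\<pi> a \<Omega>)))" using adj r.\<Omega>C bl_facts(1)[OF Lbl] unfolding hs_adjoint_def by simp
    also have "\<dots> = rest \<pi> H \<Omega> a" unfolding rest_def using LL r.\<Omega>C by simp
    finally show "rest \<pi> H \<Omega> a = rest \<pi>' H' \<Omega>' a" by simp
  qed
  have "\<forall>X\<in>hs_carrier (gns_space A (rest \<pi> H \<Omega>)). L (m_map \<pi> H \<Omega> X) = m_map \<pi>' H' \<Omega>' X"
  proof
    fix X assume X: "X \<in> hs_carrier (gns_space A (rest \<pi> H \<Omega>))"
    have X': "X \<in> hs_carrier (gns_space A (rest \<pi>' H' \<Omega>'))" using X req by simp
    have t: "hs_tendsto H' (\<lambda>n. L (\<pi> (gns_rep X n) \<Omega>)) (L (r.Phi X))"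
      by (rule bl_tendsto[OF r.hil r'.hil Lbl _ r.Phi_rep(2)[OF X]]) (simp add: r.\<Omega>C)
    have "hs_tendsto H' (\<lambda>n. \<pi>' (gns_rep X n) \<Omega>') (L (r.Phi X))" using t Lint r.\<Omega>C LO by simp
    hence "L (r.Phi X) = r'.Phi X" using r'.Phi_rep(2)[OF X'] r'.ht_unique[of "\<lambda>n. \<pi>' (gns_rep X n) \<Omega>'"] r'.\<Omega>C by simp
    thus "L (m_map \<pi> H \<Omega> X) = m_map \<pi>' H' \<Omega>' X" using r.m_eq r'.m_eq by simp
  qed
  thus ?thesis using req by simp
qed

lemma part3:
  assumes csA': "cstar_algebra A'" and csA: "cstar_algebra A" and f: "cstar_hom A' A f" and p: "is_prep A \<pi> H \<Omega>"
  shows "\<forall>X'\<in>hs_carrier (gns_space A' (rest (\<lambda>a'. \<pi> (f a')) H \<Omega>)).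
            m_map (\<lambda>a'. \<pi> (f a')) H \<Omega> X' = m_map \<pi> H \<Omega> (gns_mor A f (rest \<pi> H \<Omega>) X')"
proof -
  interpret r: reploc H A \<pi> \<Omega> by (rule mk_reploc[OF csA p])
  interpret c': cs A' by (rule cs.intro[OF csA'])
  have fax: "\<And>a b. f (ca_add A' a b) = ca_add A (f a) (f b)" "\<And>c a. f (ca_scale A' c a) = ca_scale A c (f a)"
    "\<And>a. f (ca_star A' a) = ca_star A (f a)" "\<And>a b. f (ca_mul A' a b) = ca_mul A (f a) (f b)"
    "f (ca_one A') = ca_one A" using f unfolding cstar_hom_def by blast+
  have "is_rep A' (\<lambda>a'. \<pi> (f a')) H"
    unfolding is_rep_def using r.hil r.rep_bl r.rep_add r.rep_scl r.rep_mul r.rep_one r.rep_adj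
    by (simp add: fax)
  hence "reploc H A' (\<lambda>a'. \<pi> (f a')) \<Omega>"
    by (intro reploc.intro[OF hs.intro[OF r.hil]] reploc_axioms.intro) (simp_all add: r.\<Omega>C r.\<Omega>n c'.zr_ad)
  then interpret r': reploc H A' "\<lambda>a'. \<pi> (f a')" \<Omega> .
  show ?thesis
  proof
    fix X' assume X': "X' \<in> hs_carrier (gns_space A' (rest (\<lambda>a'. \<pi> (f a')) H \<Omega>))"
    have t: "hs_tendsto H (\<lambda>n. \<pi> (f (gns_rep X' n)) \<Omega>) (r'.Phi X')" using r'.Phi_rep(2)[OF X'] by simp
    have "r.Phi (gns_class A (rest \<pi> H \<Omega>) (\<lambda>n. f (gns_rep X' n))) = r'.Phi X'" using r.of_tendsto(3)[OF t] .
    thus "m_map (\<lambda>a'. \<pi> (f a')) H \<Omega> X' = m_map \<pi> H \<Omega> (gns_mor A f (rest \<pi> H \<Omega>) X')"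
      unfolding gns_mor_def r.m_eq r'.m_eq by simp
  qed
qed

theorem lemma5p24:
  shows
  "(\<forall>(A :: 'a cstar_alg) (\<pi> :: 'a \<Rightarrow> 'h \<Rightarrow> 'h) H \<Omega>.
      cstar_algebra A \<and> is_prep A \<pi> H \<Omega> \<longrightarrow>
        (let \<omega> = rest \<pi> H \<Omega> in
           is_state A \<omega> \<and>
           is_prep A (gns_pi A \<omega>) (gns_space A \<omega>) (gns_vec A \<omega> (ca_one A)) \<and>
           (\<forall>X\<in>hs_carrier (gns_space A \<omega>). \<forall>x\<in>X. hs_tendsto H (\<lambda>n. \<pi> (x n) \<Omega>) (m_map \<pi> H \<Omega> X)) \<and>
           (\<forall>a. m_map \<pi> H \<Omega> (gns_vec A \<omega> a) = \<pi> a \<Omega>) \<and>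
           is_rep_mor A (gns_pi A \<omega>) (gns_space A \<omega>) (gns_vec A \<omega> (ca_one A)) \<pi> H \<Omega>
             (m_map \<pi> H \<Omega>)))
   \<and>
   (\<forall>(A :: 'a cstar_alg) (\<pi> :: 'a \<Rightarrow> 'h \<Rightarrow> 'h) H \<Omega> (\<pi>' :: 'a \<Rightarrow> 'k \<Rightarrow> 'k) H' \<Omega>' L.
      cstar_algebra A \<and> is_prep A \<pi> H \<Omega> \<and> is_prep A \<pi>' H' \<Omega>' \<and>
      is_rep_mor A \<pi> H \<Omega> \<pi>' H' \<Omega>' L \<longrightarrow>
        rest \<pi> H \<Omega> = rest \<pi>' H' \<Omega>' \<and>
        (\<forall>X\<in>hs_carrier (gns_space A (rest \<pi> H \<Omega>)).
            L (m_map \<pi> H \<Omega> X) = m_map \<pi>' H' \<Omega>' X))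
   \<and>
   (\<forall>(A' :: 'b cstar_alg) (A :: 'a cstar_alg) f (\<pi> :: 'a \<Rightarrow> 'h \<Rightarrow> 'h) H \<Omega>.
      cstar_algebra A' \<and> cstar_algebra A \<and> cstar_hom A' A f \<and> is_prep A \<pi> H \<Omega> \<longrightarrow>
        (\<forall>X'\<in>hs_carrier (gns_space A' (rest (\<lambda>a'. \<pi> (f a')) H \<Omega>)).
            m_map (\<lambda>a'. \<pi> (f a')) H \<Omega> X' =
            m_map \<pi> H \<Omega> (gns_mor A f (rest \<pi> H \<Omega>) X')))
   \<and>
   (\<forall>(A :: 'a cstar_alg) (\<pi> :: 'a \<Rightarrow> 'h \<Rightarrow> 'h) H \<Omega>.
      cstar_algebra A \<and> is_prep A \<pi> H \<Omega> \<and> is_cyclic \<pi> H \<Omega> \<longrightarrow>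
        (let \<omega> = rest \<pi> H \<Omega> in
           is_cyclic (gns_pi A \<omega>) (gns_space A \<omega>) (gns_vec A \<omega> (ca_one A)) \<and>
           (\<exists>M. is_rep_mor A \<pi> H \<Omega> (gns_pi A \<omega>) (gns_space A \<omega>) (gns_vec A \<omega> (ca_one A)) M \<and>
                (\<forall>X\<in>hs_carrier (gns_space A \<omega>). M (m_map \<pi> H \<Omega> X) = X) \<and>
                (\<forall>x\<in>hs_carrier H. m_map \<pi> H \<Omega> (M x) = x))))"
proof (intro conjI allI impI)
  fix A :: "'a cstar_alg" and \<pi> :: "'a \<Rightarrow> 'h \<Rightarrow> 'h" and H \<Omega>
  assume a: "cstar_algebra A \<and> is_prep A \<pi> H \<Omega>"
  interpret r: reploc H A \<pi> \<Omega> by (rule mk_reploc) (use a in auto)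
  show "let \<omega> = rest \<pi> H \<Omega> in
           is_state A \<omega> \<and>
           is_prep A (gns_pi A \<omega>) (gns_space A \<omega>) (gns_vec A \<omega> (ca_one A)) \<and>
           (\<forall>X\<in>hs_carrier (gns_space A \<omega>). \<forall>x\<in>X. hs_tendsto H (\<lambda>n. \<pi> (x n) \<Omega>) (m_map \<pi> H \<Omega> X)) \<and>
           (\<forall>a. m_map \<pi> H \<Omega> (gns_vec A \<omega> a) = \<pi> a \<Omega>) \<and>
           is_rep_mor A (gns_pi A \<omega>) (gns_space A \<omega>) (gns_vec A \<omega> (ca_one A)) \<pi> H \<Omega>
             (m_map \<pi> H \<Omega>)"
    unfolding Let_def using r.state a r.gns_is_prep r.m_tendsto r.m_vec r.m_mor by blast
next
  fix A :: "'a cstar_alg" and \<pi> :: "'a \<Rightarrow> 'h \<Rightarrow> 'h" and H \<Omega> and \<pi>' :: "'a \<Rightarrow> 'k \<Rightarrow> 'k" and H' \<Omega>' L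
  assume a: "cstar_algebra A \<and> is_prep A \<pi> H \<Omega> \<and> is_prep A \<pi>' H' \<Omega>' \<and> is_rep_mor A \<pi> H \<Omega> \<pi>' H' \<Omega>' L"
  show "rest \<pi> H \<Omega> = rest \<pi>' H' \<Omega>'" using part2[of A \<pi> H \<Omega> \<pi>' H' \<Omega>' L] a by blast
  show "\<forall>X\<in>hs_carrier (gns_space A (rest \<pi> H \<Omega>)). L (m_map \<pi> H \<Omega> X) = m_map \<pi>' H' \<Omega>' X"
    using part2[of A \<pi> H \<Omega> \<pi>' H' \<Omega>' L] a by blast
next
  fix A' :: "'b cstar_alg" and A :: "'a cstar_alg" and f and \<pi> :: "'a \<Rightarrow> 'h \<Rightarrow> 'h" and H \<Omega>
  assume a: "cstar_algebra A' \<and> cstar_algebra A \<and> cstar_hom A' A f \<and> is_prep A \<pi> H \<Omega>"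
  show "\<forall>X'\<in>hs_carrier (gns_space A' (rest (\<lambda>a'. \<pi> (f a')) H \<Omega>)).
            m_map (\<lambda>a'. \<pi> (f a')) H \<Omega> X' = m_map \<pi> H \<Omega> (gns_mor A f (rest \<pi> H \<Omega>) X')"
    using part3[of A' A f \<pi> H \<Omega>] a by blast
next
  fix A :: "'a cstar_alg" and \<pi> :: "'a \<Rightarrow> 'h \<Rightarrow> 'h" and H \<Omega>
  assume a: "cstar_algebra A \<and> is_prep A \<pi> H \<Omega> \<and> is_cyclic \<pi> H \<Omega>"
  interpret r: reploc H A \<pi> \<Omega> by (rule mk_reploc) (use a in auto)
  show "let \<omega> = rest \<pi> H \<Omega> in
           is_cyclic (gns_pi A \<omega>) (gns_space A \<omega>) (gns_vec A \<omega> (ca_one A)) \<and>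
           (\<exists>M. is_rep_mor A \<pi> H \<Omega> (gns_pi A \<omega>) (gns_space A \<omega>) (gns_vec A \<omega> (ca_one A)) M \<and>
                (\<forall>X\<in>hs_carrier (gns_space A \<omega>). M (m_map \<pi> H \<Omega> X) = X) \<and>
                (\<forall>x\<in>hs_carrier H. m_map \<pi> H \<Omega> (M x) = x))"
    unfolding Let_def using r.gns_cyclic r.cyc_part a by blast
qed


end
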